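(* Let $(\mathbf k((G_1)),l_1)$ and $(\mathbf k((G_2)),l_2)$ be series fields with prelogarithmic sections, and let $\psi$ be a morphism from $(\mathbf k((G_1)),l_1)$ to $(\mathbf k((G_2)),l_2)$. Then: (1) $\psi^{EL}:\mathbf k((G_1))^{EL}\to\mathbf k((G_2))^{EL}$ is a $\mathbf k$-embedding of ordered fields which respects arbitrary sums. (2) $\psi^{EL}(\mathrm{Log}(a))=\mathrm{Log}(\psi^{EL}(a))$ for every $a\in\mathbf k((G_1))^{EL}$ with $a>0$, and $\psi^{EL}(\mathrm{Exp}(a))=\mathrm{Exp}(\psi^{EL}(a))$ for every $a\in\mathbf k((G_1))^{EL}$. (3) If $G_2\subseteq\psi^{EL}(G_1^{\#n})$ for some $n\in\mathbb N$, then $\mathbf k((G_2^{\#m}))\subseteq\psi^{EL}\big(\mathbf k((G_1^{\#(n+m)}))\big)$ for all $m\in\mathbb N$; hence in this case $\psi^{EL}$ is surjective and $(\psi^{EL})^{-1}$ respects arbitrary sums.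
   Context: Let $\mathbf k$ be an ordered field and $(G,\cdot,<)$ a totally ordered abelian group (written multiplicatively). $\mathbf k((G))$ denotes the field of generalized power series $\alpha=\sum_{g\in G}\alpha(g)\,g$ ($\alpha(g)\in\mathbf k$) whose support $\operatorname{supp}\alpha=\{g:\alpha(g)\ne0\}$ is anti-well-ordered (every nonempty subset has a largest element), with the usual addition and convolution multiplication. It carries the canonical valuation $v(\alpha)=\max\operatorname{supp}\alpha$ for $\alpha\ne0$ and the ordering $\alpha>0$ iff $\alpha(v(\alpha))>0$. $\mathbf k$ and $G$ are identified with subsets of $\mathbf k((G))$. For $S\subseteq G$, $\mathbf k((S))=\{\alpha:\operatorname{supp}\alpha\subseteq S\}$; $G^{>1}=\{g\in G:g>1\}$, $G^{<1}$ similarly. Every $\alpha>0$ is uniquely $\alpha=g\,a\,(1+\varepsilon)$ with $g=v(\alpha)$, $a\in\mathbf k^{>0}$, $\varepsilon\in\mathbf k((G^{<1}))$. A prelogarithmic section of $\mathbf k((G))$ is an order-preserving group embedding $l:(G,\cdot)\to(\mathbf k((G^{>1})),+)$. Fix an order-preserving group isomorphism $\log:(\mathbf k^{>0},\cdot)\to(\mathbf k,+)$. The prelogarithm of $l$ is $L(g\,a(1+\varepsilon))=l(g)+\log a+\sum_{i\ge1}(-1)^{i-1}\varepsilon^i/i$. Exponential extension: $G^\#$ is the ordered abelian group of formal symbols $e(\alpha)$, $\alpha\in\mathbf k((G^{>1}))$, with $e(\alpha)e(\beta)=e(\alpha+\beta)$ and $e(\alpha)<e(\beta)\iff\alpha<\beta$,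 where $e(l(g))$ is identified with $g\in G$ (so $G\le G^\#$ and $\mathbf k((G))\subseteq\mathbf k((G^\#))$); $l^\#(e(\alpha))=\alpha$ is a prelogarithmic section of $\mathbf k((G^\#))$ extending $l$, with image $\mathbf k((G^{>1}))$. Iterating: $G^{\#0}=G$, $G^{\#(n+1)}=(G^{\#n})^\#$ with sections $l^{\#n}$ and prelogarithms $L^{\#n}$. The EL-series field is $\mathbf k((G))^{EL}=\bigcup_n\mathbf k((G^{\#n}))$ with $\mathrm{Log}=\bigcup_nL^{\#n}$, an order preserving isomorphism $(\mathbf k((G))^{EL,>0},\cdot)\to(\mathbf k((G))^{EL},+)$; $\mathrm{Exp}=\mathrm{Log}^{-1}$; $G^{EL}=\bigcup_nG^{\#n}$. Morphisms: a map $\nu:\mathbf k((G_1))\to\mathbf k((G_2))$ respects arbitrary sums if $\nu(\sum a_gg)=\sum a_g\nu(g)$. An order-preserving group embedding $\psi:G_1\to G_2$ is extended to $\mathbf k((G_1))$ by $\psi(\sum a_gg)=\sum a_g\psi(g)$; it is a morphism $(\mathbf k((G_1)),l_1)\to(\mathbf k((G_2)),l_2)$ if $\psi\circ l_1=l_2\circ\psi$ on $G_1$. It induces the morphism $\psi^\#=(l_2^\#)^{-1}\circ\psi\circ l_1^\#:G_1^\#\to G_2^\#$ extending $\psi$; iterating gives $\psi^{\#n}$, and $\psi^{EL}=\bigcup_n\psi^{\#n}:\mathbf k((G_1))^{EL}\to\mathbf k((G_2))^{EL}$. *)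

theory Defs
  imports Main
begin

text \<open>The value groups are written ADDITIVELY inside a type of class
  linordered_ab_group_add: the paper's product g*h of monomials is g + h, the
  neutral monomial 1 is 0, and G^{>1} is {g. 0 < g}. A generalized power series
  is a function from the group type to the coefficient field k with anti-well-ordered
  support contained in a given subset (subgroup) of the ambient group type.\<close>

definition hsupp :: "('u \<Rightarrow> 'k::zero) \<Rightarrow> 'u set" where
  "hsupp a = {g. a g \<noteq> 0}"

definition anti_wo :: "'u::linorder set \<Rightarrow> bool" where
  "anti_wo S \<longleftrightarrow> (\<forall>T. T \<subseteq> S \<longrightarrow> T \<noteq> {} \<longrightarrow> (\<exists>m\<in>T. \<forall>t\<in>T. t \<le> m))"

definition hahn :: "'u::linorder set \<Rightarrow> ('u \<Rightarrow> 'k::zero) set" where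
  "hahn S = {a. hsupp a \<subseteq> S \<and> anti_wo (hsupp a)}"

definition hzero :: "'u \<Rightarrow> 'k::zero" where
  "hzero = (\<lambda>_. 0)"

definition hadd :: "('u \<Rightarrow> 'k::plus) \<Rightarrow> ('u \<Rightarrow> 'k) \<Rightarrow> 'u \<Rightarrow> 'k" where
  "hadd a b = (\<lambda>g. a g + b g)"

definition hsub :: "('u \<Rightarrow> 'k::minus) \<Rightarrow> ('u \<Rightarrow> 'k) \<Rightarrow> 'u \<Rightarrow> 'k" where
  "hsub a b = (\<lambda>g. a g - b g)"

definition hscale :: "'k::times \<Rightarrow> ('u \<Rightarrow> 'k) \<Rightarrow> 'u \<Rightarrow> 'k" where
  "hscale c a = (\<lambda>g. c * a g)"

definition hconst :: "'k::zero \<Rightarrow> 'u::zero \<Rightarrow> 'k" where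
  "hconst c = (\<lambda>g. if g = 0 then c else 0)"

definition monom :: "'u \<Rightarrow> 'u \<Rightarrow> 'k::zero_neq_one" where
  "monom m = (\<lambda>g. if g = m then 1 else 0)"

text \<open>Convolution product (the index set is finite for series with anti-well-ordered support).\<close>
definition hmul :: "('u::ab_group_add \<Rightarrow> 'k::comm_ring) \<Rightarrow> ('u \<Rightarrow> 'k) \<Rightarrow> 'u \<Rightarrow> 'k" where
  "hmul a b = (\<lambda>g. \<Sum>x\<in>{x. a x \<noteq> 0 \<and> b (g - x) \<noteq> 0}. a x * b (g - x))"

definition hpow :: "('u::ab_group_add \<Rightarrow> 'k::comm_ring_1) \<Rightarrow> nat \<Rightarrow> 'u \<Rightarrow> 'k" where
  "hpow a n = ((hmul a) ^^ n) (hconst 1)"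

definition hval :: "('u::linorder \<Rightarrow> 'k::zero) \<Rightarrow> 'u" where
  "hval a = (THE m. m \<in> hsupp a \<and> (\<forall>t\<in>hsupp a. t \<le> m))"

definition hpos :: "('u::linorder \<Rightarrow> 'k::{zero,ord}) \<Rightarrow> bool" where
  "hpos a \<longleftrightarrow> a \<noteq> hzero \<and> 0 < a (hval a)"

definition hless :: "('u::linorder \<Rightarrow> 'k::{ab_group_add,ord}) \<Rightarrow> ('u \<Rightarrow> 'k) \<Rightarrow> bool" where
  "hless a b \<longleftrightarrow> hpos (hsub b a)"

definition hsummable :: "('i \<Rightarrow> 'u::linorder \<Rightarrow> 'k::zero) \<Rightarrow> 'i set \<Rightarrow> bool" where
  "hsummable F I \<longleftrightarrow> anti_wo (\<Union>i\<in>I. hsupp (F i)) \<and> (\<forall>g. finite {i\<in>I. F i g \<noteq> 0})"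

definition hsum :: "('i \<Rightarrow> 'u \<Rightarrow> 'k::comm_monoid_add) \<Rightarrow> 'i set \<Rightarrow> 'u \<Rightarrow> 'k" where
  "hsum F I = (\<lambda>g. \<Sum>i\<in>{i\<in>I. F i g \<noteq> 0}. F i g)"

definition respects_sums ::
  "('u::linorder \<Rightarrow> 'k::{comm_ring_1}) set \<Rightarrow> (('u \<Rightarrow> 'k) \<Rightarrow> ('v::linorder \<Rightarrow> 'k)) \<Rightarrow> bool" where
  "respects_sums A nu \<longleftrightarrow>
     (\<forall>a\<in>A. hsummable (\<lambda>g. hscale (a g) (nu (monom g))) (hsupp a) \<and>
             nu a = hsum (\<lambda>g. hscale (a g) (nu (monom g))) (hsupp a))"

definition sext :: "('u \<Rightarrow> 'v) \<Rightarrow> ('u \<Rightarrow> 'k::comm_monoid_add) \<Rightarrow> 'v \<Rightarrow> 'k" where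
  "sext f a = (\<lambda>h. \<Sum>g\<in>{g. a g \<noteq> 0 \<and> f g = h}. a g)"

definition subgroup_of :: "'u::ab_group_add set \<Rightarrow> bool" where
  "subgroup_of H \<longleftrightarrow> 0 \<in> H \<and> (\<forall>x\<in>H. \<forall>y\<in>H. x + y \<in> H) \<and> (\<forall>x\<in>H. - x \<in> H)"

definition prelog_section ::
  "'u::linordered_ab_group_add set \<Rightarrow> ('u \<Rightarrow> 'u \<Rightarrow> 'k::linordered_field) \<Rightarrow> bool" where
  "prelog_section G l \<longleftrightarrow> subgroup_of G \<and>
     (\<forall>x\<in>G. l x \<in> hahn {g\<in>G. 0 < g}) \<and>
     (\<forall>x\<in>G. \<forall>y\<in>G. l (x + y) = hadd (l x) (l y)) \<and>
     (\<forall>x\<in>G. \<forall>y\<in>G. x < y \<longrightarrow> hless (l x) (l y))"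

text \<open>A realisation of the tower G = G^{#0} <= G^{#1} <= ... inside one ambient
  ordered group type: H n is G^{#n}, and lam restricted to H n is l^{#n}.
  H (Suc n) is an ordered group containing H n together with an order preserving
  group isomorphism onto (k((H n^{>1})),+) extending lam on H n; this characterises
  the exponential extension up to unique isomorphism over H n.\<close>
definition EL_tower ::
  "'u::linordered_ab_group_add set \<Rightarrow> ('u \<Rightarrow> 'u \<Rightarrow> 'k::linordered_field) \<Rightarrow>
   (nat \<Rightarrow> 'u set) \<Rightarrow> ('u \<Rightarrow> 'u \<Rightarrow> 'k) \<Rightarrow> bool" where
  "EL_tower G l H lam \<longleftrightarrow> H 0 = G \<and> (\<forall>g\<in>G. lam g = l g) \<and>
     (\<forall>n. H n \<subseteq> H (Suc n) \<and> subgroup_of (H (Suc n)) \<and>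
          bij_betw lam (H (Suc n)) (hahn {g\<in>H n. 0 < g}) \<and>
          (\<forall>x\<in>H (Suc n). \<forall>y\<in>H (Suc n). lam (x + y) = hadd (lam x) (lam y)) \<and>
          (\<forall>x\<in>H (Suc n). \<forall>y\<in>H (Suc n). x < y \<longrightarrow> hless (lam x) (lam y)))"

definition ELser :: "(nat \<Rightarrow> 'u::linorder set) \<Rightarrow> ('u \<Rightarrow> 'k::zero) set" where
  "ELser H = (\<Union>n. hahn (H n))"

text \<open>Log = union of the prelogarithms L^{#n}:
  L(g a (1+eps)) = l(g) + log a + sum_{i>=1} (-1)^(i-1) eps^i / i.\<close>
definition hLog ::
  "('k::linordered_field \<Rightarrow> 'k) \<Rightarrow> ('u::linordered_ab_group_add \<Rightarrow> 'u \<Rightarrow> 'k) \<Rightarrow>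
   ('u \<Rightarrow> 'k) \<Rightarrow> 'u \<Rightarrow> 'k" where
  "hLog log lam a =
     (let m = hval a; c = a m; eps = hsub (\<lambda>h. a (h + m) / c) (hconst 1) in
      hadd (hadd (lam m) (hconst (log c)))
           (hsum (\<lambda>i::nat. hscale ((-1) ^ (i - 1) / of_nat i) (hpow eps i)) {1..}))"

definition hExp ::
  "('k::linordered_field \<Rightarrow> 'k) \<Rightarrow> (nat \<Rightarrow> 'u::linordered_ab_group_add set) \<Rightarrow>
   ('u \<Rightarrow> 'u \<Rightarrow> 'k) \<Rightarrow> ('u \<Rightarrow> 'k) \<Rightarrow> 'u \<Rightarrow> 'k" where
  "hExp log H lam b = (THE a. a \<in> ELser H \<and> hpos a \<and> hLog log lam a = b)"

primrec psiN ::
  "('u \<Rightarrow> 'u \<Rightarrow> 'k::linordered_field) \<Rightarrow> (nat \<Rightarrow> 'v set) \<Rightarrow> ('v \<Rightarrow> 'v \<Rightarrow> 'k) \<Rightarrow>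
   ('u \<Rightarrow> 'v) \<Rightarrow> nat \<Rightarrow> 'u \<Rightarrow> 'v" where
  "psiN lam1 H2 lam2 psi 0 = psi"
| "psiN lam1 H2 lam2 psi (Suc n) =
     (\<lambda>g. inv_into (H2 (Suc n)) lam2 (sext (psiN lam1 H2 lam2 psi n) (lam1 g)))"

definition psiEL ::
  "(nat \<Rightarrow> 'u set) \<Rightarrow> ('u \<Rightarrow> 'u \<Rightarrow> 'k::linordered_field) \<Rightarrow> (nat \<Rightarrow> 'v set) \<Rightarrow>
   ('v \<Rightarrow> 'v \<Rightarrow> 'k) \<Rightarrow> ('u \<Rightarrow> 'v) \<Rightarrow> 'u \<Rightarrow> 'v" where
  "psiEL H1 lam1 H2 lam2 psi g = psiN lam1 H2 lam2 psi (LEAST n. g \<in> H1 n) g"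

definition PsiEL ::
  "(nat \<Rightarrow> 'u set) \<Rightarrow> ('u \<Rightarrow> 'u \<Rightarrow> 'k::linordered_field) \<Rightarrow> (nat \<Rightarrow> 'v set) \<Rightarrow>
   ('v \<Rightarrow> 'v \<Rightarrow> 'k) \<Rightarrow> ('u \<Rightarrow> 'v) \<Rightarrow> ('u \<Rightarrow> 'k) \<Rightarrow> 'v \<Rightarrow> 'k" where
  "PsiEL H1 lam1 H2 lam2 psi = sext (psiEL H1 lam1 H2 lam2 psi)"

end

theory Submission
  imports Defs Complex_Main "HOL-Library.Infinite_Set"
begin


lemma anti_wo_max: "anti_wo S \<Longrightarrow> T \<subseteq> S \<Longrightarrow> T \<noteq> {} \<Longrightarrow> \<exists>m\<in>T. \<forall>t\<in>T. t \<le> m"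
  unfolding anti_wo_def by (elim allE impE) 

lemma anti_wo_subset: "anti_wo S \<Longrightarrow> T \<subseteq> S \<Longrightarrow> anti_wo T"
  unfolding anti_wo_def by (meson order_trans)

lemma anti_wo_empty[simp]: "anti_wo {}"
  unfolding anti_wo_def by simp

lemma anti_wo_Un: assumes "anti_wo A" "anti_wo B" shows "anti_wo (A \<union> B)"
  unfolding anti_wo_def
proof (intro allI impI)
  fix T assume T: "T \<subseteq> A \<union> B" "T \<noteq> {}"
  show "\<exists>m\<in>T. \<forall>t\<in>T. t \<le> m"
  proof (cases "T \<inter> A = {}")
    case True
    then have "T \<subseteq> B" using T by blast
    then show ?thesis using anti_wo_max[OF assms(2) _ T(2)] by blast
  next
    case nA: False
    obtain ma where ma: "ma \<in> T \<inter> A" "\<forall>t\<in>T \<inter> A. t \<le> ma" using anti_wo_max[OF assms(1) _ nA] by blast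
    show ?thesis
    proof (cases "T \<inter> B = {}")
      case True
      then have "T \<subseteq> A" using T by blast
      then show ?thesis using anti_wo_max[OF assms(1) _ T(2)] by blast
    next
      case False
      obtain mb where mb: "mb \<in> T \<inter> B" "\<forall>t\<in>T \<inter> B. t \<le> mb" using anti_wo_max[OF assms(2) _ False] by blast
      show ?thesis
      proof (cases "ma \<le> mb")
        case True
        have "\<forall>t\<in>T. t \<le> mb"
        proof
          fix t assume "t \<in> T"
          then have "t \<in> A \<or> t \<in> B" using T by blast
          then show "t \<le> mb"
          proof
            assume "t \<in> A" then have "t \<le> ma" using ma(2) \<open>t \<in> T\<close> by blast
            then show ?thesis using True by simp
          next
            assume "t \<in> B" then show ?thesis using mb(2) \<open>t \<in> T\<close> by blast
          qed
        qed
        then show ?thesis using mb by blast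
      next
        case False
        have "\<forall>t\<in>T. t \<le> ma"
        proof
          fix t assume "t \<in> T"
          then have "t \<in> A \<or> t \<in> B" using T by blast
          then show "t \<le> ma"
          proof
            assume "t \<in> B" then have "t \<le> mb" using mb(2) \<open>t \<in> T\<close> by blast
            then show ?thesis using False by simp
          next
            assume "t \<in> A" then show ?thesis using ma(2) \<open>t \<in> T\<close> by blast
          qed
        qed
        then show ?thesis using ma by blast
      qed
    qed
  qed
qed

lemma anti_wo_insert: assumes "anti_wo A" shows "anti_wo (insert x A)"
proof -
  have "anti_wo {x}" unfolding anti_wo_def by blast
  from anti_wo_Un[OF this assms] show ?thesis by simp
qed

lemma anti_wo_image: assumes "anti_wo A" "\<forall>x\<in>A. \<forall>y\<in>A. x < y \<longrightarrow> f x < f y"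
  shows "anti_wo (f ` A)"
  unfolding anti_wo_def
proof (intro allI impI)
  fix T assume T: "T \<subseteq> f ` A" "T \<noteq> {}"
  let ?U = "{x\<in>A. f x \<in> T}"
  have "?U \<noteq> {}" using T by blast
  moreover have "?U \<subseteq> A" by blast
  ultimately obtain m where m: "m \<in> ?U" "\<forall>t\<in>?U. t \<le> m" using anti_wo_max[OF assms(1)] by meson
  have "\<forall>t\<in>T. t \<le> f m"
  proof
    fix t assume "t \<in> T"
    then obtain x where x: "x \<in> A" "t = f x" using T by blast
    then have "x \<le> m" using m \<open>t\<in>T\<close> by auto
    then show "t \<le> f m"
    proof (cases "x = m")
      case False
      then have "x < m" using \<open>x \<le> m\<close> by simp
      then show ?thesis using assms(2) x m(1) by fastforce
    qed (simp add: x)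
  qed
  then show "\<exists>m\<in>T. \<forall>t\<in>T. t \<le> m" using m by blast
qed

lemma anti_wo_seq:
  fixes T :: "'a::linorder set"
  assumes "\<And>f. (\<forall>i. f i \<in> T) \<Longrightarrow> \<exists>i. \<not> f i < f (Suc i)"
  shows "anti_wo T"
proof -
  let ?r = "{(x,y). x\<in>T \<and> y\<in>T \<and> y < x}"
  have "wf ?r"
    unfolding wf_iff_no_infinite_down_chain
  proof
    assume "\<exists>f. \<forall>i. (f (Suc i), f i) \<in> ?r"
    then obtain f where "\<forall>i. (f (Suc i), f i) \<in> ?r" by blast
    then have "\<forall>i. f i \<in> T" "\<forall>i. f i < f (Suc i)" by auto
    then show False using assms by blast
  qed
  then show ?thesis unfolding anti_wo_def
  proof (intro allI impI)
    fix U assume U: "U \<subseteq> T" "U \<noteq> {}"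
    then obtain x where "x \<in> U" by blast
    then obtain z where z: "z \<in> U" "\<forall>y. (y,z) \<in> ?r \<longrightarrow> y \<notin> U" using \<open>wf ?r\<close> unfolding wf_eq_minimal by blast
    have "\<forall>t\<in>U. t \<le> z"
    proof
      fix t assume "t \<in> U"
      show "t \<le> z"
      proof (rule ccontr)
        assume "\<not> t \<le> z"
        then have "(t, z) \<in> ?r" using \<open>t \<in> U\<close> z(1) U(1) by auto
        then show False using z(2) \<open>t \<in> U\<close> by blast
      qed
    qed
    then show "\<exists>m\<in>U. \<forall>t\<in>U. t \<le> m" using z by blast
  qed
qed

lemma anti_wo_no_incr:
  fixes f :: "nat \<Rightarrow> 'a::linorder"
  assumes "anti_wo T" "\<forall>i. f i \<in> T"
  shows "\<exists>i j. i < j \<and> f j \<le> f i"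
proof (rule ccontr)
  assume "\<not> ?thesis"
  then have inc: "\<forall>i j. i < j \<longrightarrow> f i < f j" by (meson not_le)
  obtain m where m: "m \<in> range f" "\<forall>t\<in>range f. t \<le> m" using anti_wo_max[OF assms(1), of "range f"] assms(2) by blast
  then obtain k where "m = f k" by blast
  have "f (Suc k) \<le> m" using m(2) by blast
  moreover have "f k < f (Suc k)" using inc by blast
  ultimately show False using \<open>m = f k\<close> by simp
qed


section \<open>Higman for a total order (reverse)\<close>

inductive emb :: "'a::linorder list \<Rightarrow> 'a list \<Rightarrow> bool" where
  emb_Nil: "emb [] w"
| emb_skip: "emb u w \<Longrightarrow> emb u (x # w)"
| emb_match: "emb u w \<Longrightarrow> y \<le> x \<Longrightarrow> emb (x # u) (y # w)"

definition bad :: "'a::linorder set \<Rightarrow> (nat \<Rightarrow> 'a list) \<Rightarrow> bool" where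
  "bad S s \<longleftrightarrow> (\<forall>k. set (s k) \<subseteq> S) \<and> (\<forall>i j. i < j \<longrightarrow> \<not> emb (s i) (s j))"

definition cand :: "'a::linorder set \<Rightarrow> 'a list list \<Rightarrow> 'a list set" where
  "cand S p = {w. \<exists>s. bad S s \<and> (\<forall>i<length p. s i = p ! i) \<and> s (length p) = w}"

primrec pre :: "'a::linorder set \<Rightarrow> nat \<Rightarrow> 'a list list" where
  "pre S 0 = []"
| "pre S (Suc n) = pre S n @ [SOME w. w \<in> cand S (pre S n) \<and> (\<forall>w'\<in>cand S (pre S n). length w \<le> length w')]"

lemma pre_length[simp]: "length (pre S n) = n"
  by (induct n) auto

lemma pre_nth: "i < n \<Longrightarrow> pre S n ! i = pre S (Suc i) ! i"
proof (induct n)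
  case 0 then show ?case by simp
next
  case (Suc n)
  then show ?case by (cases "i = n") (auto simp: nth_append)
qed

lemma cand_min_ex: assumes "cand S p \<noteq> {}"
  shows "\<exists>w. w \<in> cand S p \<and> (\<forall>w'\<in>cand S p. length w \<le> length w')"
proof -
  obtain w0 where "w0 \<in> cand S p" using assms by blast
  define n where "n = (LEAST n. \<exists>w\<in>cand S p. length w = n)"
  have "\<exists>w\<in>cand S p. length w = n" unfolding n_def by (rule LeastI[of _ "length w0"]) (use \<open>w0 \<in> _\<close> in blast)
  moreover have "\<forall>w'\<in>cand S p. n \<le> length w'" unfolding n_def by (auto intro: Least_le)
  ultimately show ?thesis by auto
qed

lemma pre_cand:
  assumes "bad S s0"
  shows "cand S (pre S n) \<noteq> {}"
proof (induct n)
  case 0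
  have "s0 0 \<in> cand S (pre S 0)" using assms unfolding cand_def by auto
  then show ?case by blast
next
  case (Suc n)
  let ?w = "SOME w. w \<in> cand S (pre S n) \<and> (\<forall>w'\<in>cand S (pre S n). length w \<le> length w')"
  have "?w \<in> cand S (pre S n)" using someI_ex[OF cand_min_ex[OF Suc]] by blast
  then obtain s where s: "bad S s" "\<forall>i<n. s i = pre S n ! i" "s n = ?w" unfolding cand_def by auto
  have "\<forall>i<Suc n. s i = pre S (Suc n) ! i"
    using s by (auto simp: nth_append less_Suc_eq)
  then have "s (Suc n) \<in> cand S (pre S (Suc n))" using s unfolding cand_def by auto
  then show ?case by blast
qed

lemma higman:
  fixes S :: "'a::linorder set" and s :: "nat \<Rightarrow> 'a list"
  assumes aw: "anti_wo S" and sS: "\<forall>k. set (s k) \<subseteq> S"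
  shows "\<exists>i j. i < j \<and> emb (s i) (s j)"
proof (rule ccontr)
  assume "\<not> ?thesis"
  then have bs: "bad S s" using sS unfolding bad_def by blast
  define m where "m k = pre S (Suc k) ! k" for k
  define W where "W n = (SOME w. w \<in> cand S (pre S n) \<and> (\<forall>w'\<in>cand S (pre S n). length w \<le> length w'))" for n
  have W: "W n \<in> cand S (pre S n) \<and> (\<forall>w'\<in>cand S (pre S n). length (W n) \<le> length w')" for n
    unfolding W_def using someI_ex[OF cand_min_ex[OF pre_cand[OF bs]]] by blast
  have mW: "m k = W k" for k unfolding m_def W_def by (simp add: nth_append)
  have pre_m: "i < n \<Longrightarrow> pre S n ! i = m i" for i n unfolding m_def by (rule pre_nth)
  have mbad: "bad S m"
    unfolding bad_def
  proof (intro conjI allI impI)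
    fix k
    obtain s' where "bad S s'" "s' k = m k" using W[of k] mW[of k] unfolding cand_def by auto
    then show "set (m k) \<subseteq> S" unfolding bad_def by metis
  next
    fix i j :: nat assume ij: "i < j"
    obtain s' where s': "bad S s'" "\<forall>l<j. s' l = pre S j ! l" "s' j = m j"
      using W[of j] mW[of j] unfolding cand_def by auto
    then have "s' i = m i" using ij pre_m by auto
    then show "\<not> emb (m i) (m j)" using s' ij unfolding bad_def by metis
  qed
  have mmin: "length (m k) \<le> length (t k)" if "bad S t" "\<forall>i<k. t i = m i" for t k
  proof -
    have "t k \<in> cand S (pre S k)" unfolding cand_def using that pre_m by auto
    then show ?thesis using W[of k] mW[of k] by auto
  qed
  have ne: "m k \<noteq> []" for k
  proof
    assume "m k = []"
    then have "emb (m k) (m (Suc k))" by (simp add: emb_Nil)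
    then show False using mbad unfolding bad_def by blast
  qed
  define h where "h k = hd (m k)" for k
  define tl' where "tl' k = tl (m k)" for k
  have mht: "m k = h k # tl' k" for k using ne[of k] unfolding h_def tl'_def by simp
  have hS: "h k \<in> S" for k
  proof -
    have "set (m k) \<subseteq> S" using mbad unfolding bad_def by blast
    then show ?thesis using mht[of k] by simp
  qed
  obtain r where r: "strict_mono r" "monoseq (\<lambda>n. h (r n))" using seq_monosub by blast
  have "\<exists>r'::nat\<Rightarrow>nat. strict_mono r' \<and> (\<forall>i j. i \<le> j \<longrightarrow> h (r' j) \<le> h (r' i))"
  proof (cases "\<forall>m. \<forall>n\<ge>m. h (r n) \<le> h (r m)")
    case True then show ?thesis using r(1) by blast
  next
    case False
    then have inc: "\<forall>m. \<forall>n\<ge>m. h (r m) \<le> h (r n)" using r(2) unfolding monoseq_def by blast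
    have "range (\<lambda>n. h (r n)) \<subseteq> S" using hS by auto
    moreover have "range (\<lambda>n. h (r n)) \<noteq> {}" by simp
    ultimately obtain M where M: "M \<in> range (\<lambda>n. h (r n))" "\<forall>t\<in>range (\<lambda>n. h (r n)). t \<le> M"
      using anti_wo_max[OF aw] by meson
    then obtain K where K: "M = h (r K)" by blast
    have const: "\<forall>n\<ge>K. h (r n) = M"
    proof (intro allI impI)
      fix n assume "K \<le> n"
      then have "M \<le> h (r n)" using inc K by blast
      moreover have "h (r n) \<le> M" using M(2) by blast
      ultimately show "h (r n) = M" by simp
    qed
    have "strict_mono (\<lambda>n. r (n + K))" using r(1) unfolding strict_mono_def by simp
    moreover have "\<forall>i j. i \<le> j \<longrightarrow> h (r (j + K)) \<le> h (r (i + K))" using const by simp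
    ultimately show ?thesis by blast
  qed
  then obtain q :: "nat \<Rightarrow> nat" where q: "strict_mono q" "\<forall>i j. i \<le> j \<longrightarrow> h (q j) \<le> h (q i)" by blast
  define t where "t k = (if k < q 0 then m k else tl' (q (k - q 0)))" for k
  have qge: "q 0 \<le> q n" for n using q(1) by (simp add: strict_mono_less_eq)
  have tbad: "bad S t"
    unfolding bad_def
  proof (intro conjI allI impI)
    fix k
    have mS: "set (m j) \<subseteq> S" for j using mbad unfolding bad_def by blast
    have "set (tl' j) \<subseteq> S" for j using mS[of j] mht[of j] by simp
    then show "set (t k) \<subseteq> S" unfolding t_def using mS by simp
  next
    fix i j :: nat assume ij: "i < j"
    show "\<not> emb (t i) (t j)"
    proof
      assume e: "emb (t i) (t j)"
      show False
      proof (cases "j < q 0")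
        case True
        then show False using e ij mbad unfolding t_def bad_def by auto
      next
        case jge: False
        let ?b = "q (j - q 0)"
        have ejm: "emb (t i) (m ?b)" using e jge unfolding t_def by (simp add: mht emb_skip)
        show False
        proof (cases "i < q 0")
          case True
          have "i < ?b" using True qge by (meson less_le_trans)
          then show False using ejm True mbad unfolding t_def bad_def by auto
        next
          case False
          let ?a = "q (i - q 0)"
          have lt: "i - q 0 < j - q 0" using False jge ij by simp
          then have "h ?b \<le> h ?a" using q(2) by simp
          moreover have "emb (tl' ?a) (tl' ?b)" using e False jge unfolding t_def by simp
          ultimately have "emb (m ?a) (m ?b)" by (simp add: mht emb_match)
          moreover have "?a < ?b" using q(1) lt by (simp add: strict_mono_less)
          ultimately show False using mbad unfolding bad_def by blast
        qed
      qed
    qed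
  qed
  have "\<forall>i<q 0. t i = m i" unfolding t_def by simp
  then have "length (m (q 0)) \<le> length (t (q 0))" using mmin[OF tbad] by blast
  moreover have "t (q 0) = tl' (q 0)" unfolding t_def by simp
  ultimately show False using mht[of "q 0"] by simp
qed




lemma emb_length: "emb u w \<Longrightarrow> length u \<le> length w"
  by (induct rule: emb.induct) auto

lemma sum_list_neg:
  fixes w :: "'a::linordered_ab_group_add list"
  shows "\<forall>x\<in>set w. x < 0 \<Longrightarrow> sum_list w \<le> 0 \<and> (w \<noteq> [] \<longrightarrow> sum_list w < 0)"
proof (induct w)
  case (Cons a w)
  then have "a < 0" "sum_list w \<le> 0" by auto
  then show ?case by (simp add: add_neg_nonpos add_nonpos_nonpos)
qed simp

lemma emb_sum:
  fixes u w :: "'a::linordered_ab_group_add list"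
  assumes "emb u w" "\<forall>x\<in>set w. x < 0"
  shows "sum_list w \<le> sum_list u \<and> (length u < length w \<longrightarrow> sum_list w < sum_list u)"
  using assms
proof (induct rule: emb.induct)
  case (emb_Nil w)
  then show ?case using sum_list_neg[of w] by auto
next
  case (emb_skip u w x)
  then have a: "sum_list w \<le> sum_list u" "x < 0" by auto
  then have "x + sum_list w < sum_list u" using add_less_le_mono[of x 0 "sum_list w" "sum_list u"] by simp
  then show ?case by simp
next
  case (emb_match u w y x)
  then have h: "sum_list w \<le> sum_list u \<and> (length u < length w \<longrightarrow> sum_list w < sum_list u)" by auto
  show ?case using h emb_match(3) by (auto intro: add_mono add_le_less_mono)
qed

definition nsum :: "'a::monoid_add set \<Rightarrow> nat \<Rightarrow> 'a set" where
  "nsum S i = {sum_list w | w. length w = i \<and> set w \<subseteq> S}"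

definition mon :: "'a::monoid_add set \<Rightarrow> 'a set" where
  "mon S = {sum_list w | w. w \<noteq> [] \<and> set w \<subseteq> S}"

lemma neumann_wo:
  fixes S :: "'a::linordered_ab_group_add set"
  assumes aw: "anti_wo S" and neg: "\<forall>x\<in>S. x < 0"
  shows "anti_wo (mon S)"
proof (rule anti_wo_seq)
  fix f :: "nat \<Rightarrow> 'a" assume fM: "\<forall>i. f i \<in> mon S"
  show "\<exists>i. \<not> f i < f (Suc i)"
  proof (rule ccontr)
    assume "\<not> ?thesis"
    then have inc: "\<forall>i. f i < f (Suc i)" by simp
    then have sm: "strict_mono f" by (simp add: strict_mono_Suc_iff)
    define w where "w i = (SOME w. w \<noteq> [] \<and> set w \<subseteq> S \<and> sum_list w = f i)" for i
    have w: "w i \<noteq> [] \<and> set (w i) \<subseteq> S \<and> sum_list (w i) = f i" for i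
    proof -
      have "f i \<in> mon S" using fM by blast
      then have "\<exists>w. w \<noteq> [] \<and> set w \<subseteq> S \<and> sum_list w = f i" unfolding mon_def by auto
      then show ?thesis unfolding w_def by (rule someI_ex)
    qed
    have "\<forall>k. set (w k) \<subseteq> S" using w by blast
    then obtain i j where ij: "i < j" "emb (w i) (w j)" using higman[OF aw, of w] by blast
    have "set (w j) \<subseteq> S" using w by blast
    then have "\<forall>x\<in>set (w j). x < 0" using neg by blast
    then have "f j \<le> f i" using emb_sum[OF ij(2)] w by simp
    moreover have "f i < f j" using sm ij(1) by (simp add: strict_mono_less)
    ultimately show False by simp
  qed
qed

lemma neumann_fin:
  fixes S :: "'a::linordered_ab_group_add set"
  assumes aw: "anti_wo S" and neg: "\<forall>x\<in>S. x < 0"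
  shows "finite {i. g \<in> nsum S i}"
proof (rule ccontr)
  let ?N = "{i. g \<in> nsum S i}"
  assume inf: "\<not> finite ?N"
  define e where "e = Infinite_Set.enumerate ?N"
  have eN: "e k \<in> ?N" for k unfolding e_def using enumerate_in_set[OF inf] .
  have sm: "strict_mono e" unfolding e_def using strict_mono_enumerate[OF inf] .
  define w where "w k = (SOME w. length w = e k \<and> set w \<subseteq> S \<and> sum_list w = g)" for k
  have w: "length (w k) = e k \<and> set (w k) \<subseteq> S \<and> sum_list (w k) = g" for k
  proof -
    have "\<exists>w. length w = e k \<and> set w \<subseteq> S \<and> sum_list w = g" using eN[of k] unfolding nsum_def by auto
    then show ?thesis unfolding w_def by (rule someI_ex)
  qed
  have "\<forall>k. set (w k) \<subseteq> S" using w by blast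
  then obtain i j where ij: "i < j" "emb (w i) (w j)" using higman[OF aw, of w] by blast
  have "set (w j) \<subseteq> S" using w by blast
  then have "\<forall>x\<in>set (w j). x < 0" using neg by blast
  moreover have "length (w i) < length (w j)" using w sm ij(1) by (simp add: strict_mono_less)
  ultimately have "sum_list (w j) < sum_list (w i)" using emb_sum[OF ij(2)] by simp
  then show False using w by simp
qed

lemma mon_add: "x \<in> mon S \<Longrightarrow> y \<in> mon S \<Longrightarrow> x + y \<in> mon S"
proof -
  assume "x \<in> mon S" "y \<in> mon S"
  then obtain u v where "u \<noteq> []" "set u \<subseteq> S" "x = sum_list u" "v \<noteq> []" "set v \<subseteq> S" "y = sum_list v"
    unfolding mon_def by blast
  then show "x + y \<in> mon S" unfolding mon_def by (intro CollectI exI[of _ "u @ v"]) auto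
qed

lemma mon_base: "x \<in> S \<Longrightarrow> x \<in> mon S"
  unfolding mon_def by (intro CollectI exI[of _ "[x]"]) auto

lemma mon_subset: "(\<forall>x\<in>S. P x) \<Longrightarrow> (\<forall>x y. P x \<longrightarrow> P y \<longrightarrow> P (x + y)) \<Longrightarrow> z \<in> mon S \<Longrightarrow> P z"
proof -
  assume a: "\<forall>x\<in>S. P x" "\<forall>x y. P x \<longrightarrow> P y \<longrightarrow> P (x + y)" "z \<in> mon S"
  then obtain w where w: "w \<noteq> []" "set w \<subseteq> S" "z = sum_list w" unfolding mon_def by blast
  have "w \<noteq> [] \<Longrightarrow> set w \<subseteq> S \<Longrightarrow> P (sum_list w)"
  proof (induct w)
    case Nil then show ?case by simp
  next
    case (Cons x w)
    then show ?case using a(1,2) by (cases "w = []") auto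
  qed
  then show "P z" using w by simp
qed




lemma hsupp_iff[simp]: "x \<in> hsupp a \<longleftrightarrow> a x \<noteq> 0"
  by (simp add: hsupp_def)

lemma hmul_nz:
  assumes "hmul a b g \<noteq> 0" shows "\<exists>x. a x \<noteq> 0 \<and> b (g - x) \<noteq> 0"
proof -
  have "(\<Sum>x\<in>{x. a x \<noteq> 0 \<and> b (g - x) \<noteq> 0}. a x * b (g - x)) \<noteq> 0" using assms by (simp add: hmul_def)
  then obtain x where "x \<in> {x. a x \<noteq> 0 \<and> b (g - x) \<noteq> 0}" by (meson sum.not_neutral_contains_not_neutral)
  then show ?thesis by blast
qed

lemma hpow_0[simp]: "hpow a 0 = hconst 1" by (simp add: hpow_def)
lemma hpow_Suc: "hpow a (Suc n) = hmul a (hpow a n)" by (simp add: hpow_def)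

lemma hmul_one: "hmul a (hconst 1) = (a :: 'u::ab_group_add \<Rightarrow> 'k::comm_ring_1)"
proof
  fix g
  have "{x. a x \<noteq> 0 \<and> hconst (1::'k) (g - x) \<noteq> 0} = (if a g \<noteq> 0 then {g} else {})"
    by (auto simp: hconst_def)
  then show "hmul a (hconst 1) g = a g" by (simp add: hmul_def hconst_def)
qed

lemma hpow_1[simp]: "hpow a 1 = (a :: 'u::ab_group_add \<Rightarrow> 'k::comm_ring_1)"
  using hpow_Suc[of a 0] by (simp add: hmul_one)

lemma hpow_nsum:
  fixes e :: "'u::ab_group_add \<Rightarrow> 'k::comm_ring_1"
  shows "hpow e i g \<noteq> 0 \<Longrightarrow> g \<in> nsum (hsupp e) i"
proof (induct i arbitrary: g)
  case 0
  then have "g = 0" by (auto simp: hconst_def split: if_splits)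
  then show ?case unfolding nsum_def by (intro CollectI exI[of _ "[]"]) auto
next
  case (Suc i)
  then obtain x where x: "e x \<noteq> 0" "hpow e i (g - x) \<noteq> 0" using hmul_nz by (metis hpow_Suc)
  then have "g - x \<in> nsum (hsupp e) i" using Suc by blast
  then obtain w where w: "length w = i" "set w \<subseteq> hsupp e" "g - x = sum_list w" unfolding nsum_def by blast
  have "g = sum_list (x # w)" using w(3) by (simp add: algebra_simps)
  then show ?case unfolding nsum_def using w x by (intro CollectI exI[of _ "x # w"]) auto
qed

lemma nsum_neg:
  fixes S :: "'u::linordered_ab_group_add set"
  assumes "\<forall>x\<in>S. x < 0" "g \<in> nsum S i"
  shows "g \<le> 0 \<and> (i \<noteq> 0 \<longrightarrow> g < 0)"
proof -
  obtain w where w: "length w = i" "set w \<subseteq> S" "g = sum_list w" using assms(2) unfolding nsum_def by blast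
  then have "\<forall>x\<in>set w. x < 0" using assms(1) by blast
  then show ?thesis using sum_list_neg[of w] w by auto
qed

lemma nsum_mon: "i \<noteq> 0 \<Longrightarrow> nsum S i \<subseteq> mon S"
  unfolding nsum_def mon_def by auto

definition negsupp :: "('u::linordered_ab_group_add \<Rightarrow> 'k::zero) \<Rightarrow> bool" where
  "negsupp e \<longleftrightarrow> (\<forall>x. e x \<noteq> 0 \<longrightarrow> x < 0)"

lemma hpow_neg:
  fixes e :: "'u::linordered_ab_group_add \<Rightarrow> 'k::comm_ring_1"
  assumes "negsupp e" "hpow e i g \<noteq> 0"
  shows "g \<le> 0 \<and> (i \<noteq> 0 \<longrightarrow> g < 0)"
  using nsum_neg[OF _ hpow_nsum[OF assms(2)]] assms(1) unfolding negsupp_def by auto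

lemma hpow_local:
  fixes e e' :: "'u::linordered_ab_group_add \<Rightarrow> 'k::comm_ring_1"
  assumes ne: "negsupp e" "negsupp e'" and ag: "\<forall>y\<ge>g. e y = e' y"
  shows "\<forall>y\<ge>g. hpow e i y = hpow e' i y"
proof (induct i)
  case 0 then show ?case by simp
next
  case (Suc i)
  show ?case
  proof (intro allI impI)
    fix y assume yg: "g \<le> y"
    have S: "{x. e x \<noteq> 0 \<and> hpow e i (y - x) \<noteq> 0} = {x. e' x \<noteq> 0 \<and> hpow e' i (y - x) \<noteq> 0}"
    proof (intro set_eqI iffI; clarsimp)
      fix x assume a: "e x \<noteq> 0" "hpow e i (y - x) \<noteq> 0"
      have "y - x \<le> 0" using hpow_neg[OF ne(1) a(2)] by simp
      then have "y \<le> x" by simp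
      moreover have "x < 0" using a(1) ne(1) unfolding negsupp_def by blast
      ultimately have "g \<le> x" "g \<le> y - x" using yg by (auto intro: order_trans[OF yg])
      then show "e' x \<noteq> 0 \<and> hpow e' i (y - x) \<noteq> 0" using a ag Suc by auto
    next
      fix x assume a: "e' x \<noteq> 0" "hpow e' i (y - x) \<noteq> 0"
      have "y - x \<le> 0" using hpow_neg[OF ne(2) a(2)] by simp
      then have "y \<le> x" by simp
      moreover have "x < 0" using a(1) ne(2) unfolding negsupp_def by blast
      ultimately have "g \<le> x" "g \<le> y - x" using yg by (auto intro: order_trans[OF yg])
      then show "e x \<noteq> 0 \<and> hpow e i (y - x) \<noteq> 0" using a ag Suc by auto
    qed
    have "hmul e (hpow e i) y = hmul e' (hpow e' i) y"
      unfolding hmul_def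
    proof (subst S, rule sum.cong[OF refl])
      fix x assume "x \<in> {x. e' x \<noteq> 0 \<and> hpow e' i (y - x) \<noteq> 0}"
      then have a: "e' x \<noteq> 0" "hpow e' i (y - x) \<noteq> 0" by auto
      have "y - x \<le> 0" using hpow_neg[OF ne(2) a(2)] by simp
      then have "y \<le> x" by simp
      moreover have "x < 0" using a(1) ne(2) unfolding negsupp_def by blast
      ultimately have "g \<le> x" "g \<le> y - x" using yg by (auto intro: order_trans[OF yg])
      then show "e x * hpow e i (y - x) = e' x * hpow e' i (y - x)" using ag Suc by auto
    qed
    then show "hpow e (Suc i) y = hpow e' (Suc i) y" by (simp add: hpow_Suc)
  qed
qed

lemma hpow_local_strict:
  fixes e e' :: "'u::linordered_ab_group_add \<Rightarrow> 'k::comm_ring_1"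
  assumes ne: "negsupp e" "negsupp e'" and ag: "\<forall>y>g. e y = e' y"
  shows "hpow e (Suc (Suc j)) g = hpow e' (Suc (Suc j)) g"
proof -
  have key: "e x = e' x \<and> hpow e (Suc j) (g - x) = hpow e' (Suc j) (g - x)"
    if x: "x < 0" "g - x < 0" for x
  proof -
    have "g < x" using x(2) by simp
    moreover have ggx: "g < g - x" using x(1) by simp
    have "\<forall>y\<ge>g - x. e y = e' y"
    proof (intro allI impI)
      fix y assume "g - x \<le> y"
      then have "g < y" using ggx by (rule less_le_trans[rotated])
      then show "e y = e' y" using ag by blast
    qed
    then have "\<forall>y\<ge>g - x. hpow e (Suc j) y = hpow e' (Suc j) y" using hpow_local[OF ne] by blast
    ultimately show ?thesis using ag by auto
  qed
  have S: "{x. e x \<noteq> 0 \<and> hpow e (Suc j) (g - x) \<noteq> 0} = {x. e' x \<noteq> 0 \<and> hpow e' (Suc j) (g - x) \<noteq> 0}"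
  proof (intro set_eqI iffI; clarsimp)
    fix x assume a: "e x \<noteq> 0" "hpow e (Suc j) (g - x) \<noteq> 0"
    have "x < 0" using a(1) ne(1) unfolding negsupp_def by blast
    moreover have "g - x < 0" using hpow_neg[OF ne(1) a(2)] by simp
    ultimately show "e' x \<noteq> 0 \<and> hpow e' (Suc j) (g - x) \<noteq> 0" using key a by metis
  next
    fix x assume a: "e' x \<noteq> 0" "hpow e' (Suc j) (g - x) \<noteq> 0"
    have "x < 0" using a(1) ne(2) unfolding negsupp_def by blast
    moreover have "g - x < 0" using hpow_neg[OF ne(2) a(2)] by simp
    ultimately show "e x \<noteq> 0 \<and> hpow e (Suc j) (g - x) \<noteq> 0" using key a by metis
  qed
  have "hmul e (hpow e (Suc j)) g = hmul e' (hpow e' (Suc j)) g"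
    unfolding hmul_def
  proof (subst S, rule sum.cong[OF refl])
    fix x assume "x \<in> {x. e' x \<noteq> 0 \<and> hpow e' (Suc j) (g - x) \<noteq> 0}"
    then have a: "e' x \<noteq> 0" "hpow e' (Suc j) (g - x) \<noteq> 0" by auto
    have "x < 0" using a(1) ne(2) unfolding negsupp_def by blast
    moreover have "g - x < 0" using hpow_neg[OF ne(2) a(2)] by simp
    ultimately show "e x * hpow e (Suc j) (g - x) = e' x * hpow e' (Suc j) (g - x)" using key by metis
  qed
  then show ?thesis by (simp add: hpow_Suc)
qed




definition cf :: "nat \<Rightarrow> 'k::linordered_field" where
  "cf i = (-1) ^ (i - 1) / of_nat i"

definition Lser :: "('u::linordered_ab_group_add \<Rightarrow> 'k::linordered_field) \<Rightarrow> 'u \<Rightarrow> 'k" where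
  "Lser e = hsum (\<lambda>i::nat. hscale ((-1) ^ (i - 1) / of_nat i) (hpow e i)) {1..}"

definition Rr :: "('u::linordered_ab_group_add \<Rightarrow> 'k::linordered_field) \<Rightarrow> 'u \<Rightarrow> 'k" where
  "Rr e g = (\<Sum>i\<in>{i. 2 \<le> i \<and> hpow e i g \<noteq> 0}. cf i * hpow e i g)"

lemma cf_nz: "i \<noteq> 0 \<Longrightarrow> (cf i :: 'k::linordered_field) \<noteq> 0"
  unfolding cf_def by simp

lemma Lser_eq: "Lser e g = (\<Sum>i\<in>{i. 1 \<le> i \<and> hpow e i g \<noteq> 0}. cf i * hpow e i g)"
proof -
  have "{i\<in>{1..}. (-1) ^ (i - 1) / of_nat i * hpow e i g \<noteq> 0} = {i. 1 \<le> i \<and> hpow e i g \<noteq> 0}"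
    using cf_nz unfolding cf_def by force
  then show ?thesis unfolding Lser_def hsum_def hscale_def cf_def by simp
qed

lemma Lser_split:
  assumes fin: "finite {i. hpow e i g \<noteq> 0}"
  shows "Lser e g = e g + Rr e g"
proof -
  let ?A = "{i. 1 \<le> i \<and> hpow e i g \<noteq> 0}"
  let ?B = "{i. 2 \<le> i \<and> hpow e i g \<noteq> 0}"
  let ?f = "\<lambda>i. cf i * hpow e i g"
  have fB: "finite ?B" using fin by (rule finite_subset[rotated]) auto
  have "sum ?f ?A = sum ?f (insert 1 ?B)"
    by (rule sum.mono_neutral_left) (use fB in auto)
  also have "\<dots> = ?f 1 + sum ?f ?B" using fB by (subst sum.insert) auto
  also have "?f 1 = e g" using hpow_1[of e] by (simp add: cf_def)
  finally show ?thesis unfolding Lser_eq Rr_def .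
qed

lemma Rr_local:
  assumes ne: "negsupp e" "negsupp e'" and ag: "\<forall>y>g. e y = e' y"
  shows "Rr e g = Rr e' g"
proof -
  have h: "hpow e i g = hpow e' i g" if "2 \<le> i" for i
  proof -
    have "i = Suc (Suc (i - 2))" using that by simp
    then obtain j where "i = Suc (Suc j)" by blast
    then show ?thesis using hpow_local_strict[OF ne ag] by simp
  qed
  have S: "{i. 2 \<le> i \<and> hpow e i g \<noteq> 0} = {i. 2 \<le> i \<and> hpow e' i g \<noteq> 0}" using h by auto
  show ?thesis unfolding Rr_def by (subst S, rule sum.cong) (auto simp: h)
qed

lemma fin_hpow:
  assumes "anti_wo (hsupp e)" "negsupp e"
  shows "finite {i. hpow e i g \<noteq> 0}"
proof -
  have "finite {i. g \<in> nsum (hsupp e) i}"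
    by (rule neumann_fin) (use assms in \<open>auto simp: negsupp_def\<close>)
  then show ?thesis by (rule finite_subset[rotated]) (auto intro: hpow_nsum)
qed

lemma Lser_nz: "Lser e g \<noteq> 0 \<Longrightarrow> \<exists>i\<ge>1. hpow e i g \<noteq> 0"
proof -
  assume "Lser e g \<noteq> 0"
  then obtain i where "i \<in> {i. 1 \<le> i \<and> hpow e i g \<noteq> 0}" unfolding Lser_eq
    by (meson sum.not_neutral_contains_not_neutral)
  then show ?thesis by blast
qed

lemma Lser_negsupp: "negsupp e \<Longrightarrow> negsupp (Lser e)"
  unfolding negsupp_def[of "Lser e"]
proof (intro allI impI)
  fix x assume "negsupp e" "Lser e x \<noteq> 0"
  then obtain i where "i \<ge> 1" "hpow e i x \<noteq> 0" using Lser_nz by blast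
  then show "x < 0" using hpow_neg[OF \<open>negsupp e\<close>] by auto
qed

lemma Lser_mon: "Lser e g \<noteq> 0 \<Longrightarrow> g \<in> mon (hsupp e)"
proof -
  assume "Lser e g \<noteq> 0"
  then obtain i where "i \<ge> 1" "hpow e i g \<noteq> 0" using Lser_nz by blast
  then have "g \<in> nsum (hsupp e) i" using hpow_nsum by blast
  then show ?thesis using nsum_mon[of i "hsupp e"] \<open>i \<ge> 1\<close> by auto
qed

lemma Lser_inj:
  assumes a: "anti_wo (hsupp e)" "negsupp e" and a': "anti_wo (hsupp e')" "negsupp e'"
    and eq: "Lser e = Lser e'"
  shows "e = e'"
proof (rule ccontr)
  assume "e \<noteq> e'"
  let ?D = "{g. e g \<noteq> e' g}"
  have "?D \<noteq> {}" using \<open>e \<noteq> e'\<close> by auto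
  moreover have "?D \<subseteq> hsupp e \<union> hsupp e'" by auto
  ultimately obtain g where g: "g \<in> ?D" "\<forall>t\<in>?D. t \<le> g"
    using anti_wo_max[OF anti_wo_Un[OF a(1) a'(1)]] by meson
  have ag: "\<forall>y>g. e y = e' y" using g(2) by (meson leD mem_Collect_eq)
  have "Lser e g = e g + Rr e g" using Lser_split[OF fin_hpow[OF a]] .
  moreover have "Lser e' g = e' g + Rr e' g" using Lser_split[OF fin_hpow[OF a']] .
  moreover have "Rr e g = Rr e' g" using Rr_local[OF a(2) a'(2) ag] .
  ultimately have "e g = e' g" using eq by simp
  then show False using g(1) by simp
qed

lemma Lser_surj:
  fixes d :: "'u::linordered_ab_group_add \<Rightarrow> 'k::linordered_field"
  assumes ad: "anti_wo (hsupp d)" and nd: "negsupp d"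
  shows "\<exists>e. hsupp e \<subseteq> mon (hsupp d) \<and> Lser e = d"
proof -
  let ?M = "mon (hsupp d)"
  have aM: "anti_wo ?M" by (rule neumann_wo[OF ad]) (use nd in \<open>auto simp: negsupp_def\<close>)
  have Mneg: "x \<in> ?M \<Longrightarrow> x < 0" for x
    by (rule mon_subset[of "hsupp d" "\<lambda>x. x < 0"]) (use nd in \<open>auto simp: negsupp_def add_neg_neg\<close>)
  define Rel where "Rel = {(y, x). y \<in> ?M \<and> x < y}"
  have wfR: "wf Rel"
    unfolding wf_eq_minimal
  proof (intro allI impI)
    fix x :: 'u and Q assume "x \<in> Q"
    show "\<exists>z\<in>Q. \<forall>y. (y, z) \<in> Rel \<longrightarrow> y \<notin> Q"
    proof (cases "Q \<inter> ?M = {}")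
      case True
      have "\<forall>y. (y, x) \<in> Rel \<longrightarrow> y \<notin> Q"
      proof (intro allI impI)
        fix y assume "(y, x) \<in> Rel"
        then have "y \<in> ?M" unfolding Rel_def by simp
        then show "y \<notin> Q" using True by blast
      qed
      then show ?thesis using \<open>x \<in> Q\<close> by blast
    next
      case False
      then obtain z where z: "z \<in> Q \<inter> ?M" "\<forall>t\<in>Q \<inter> ?M. t \<le> z" using anti_wo_max[OF aM Int_lower2 False] by blast
      have "\<forall>y. (y, z) \<in> Rel \<longrightarrow> y \<notin> Q"
      proof (intro allI impI)
        fix y assume "(y, z) \<in> Rel"
        then have "y \<in> ?M" "z < y" unfolding Rel_def by auto
        then show "y \<notin> Q" using z(2) by (meson IntI leD)
      qed
      then show ?thesis using z by blast
    qed
  qed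
  define F where "F rec x = d x - Rr (\<lambda>y. if y \<in> ?M \<and> x < y then rec y else 0) x" for rec x
  define W where "W = wfrec Rel F"
  define e where "e x = (if x \<in> ?M then W x else 0)" for x
  have ne: "negsupp e" unfolding negsupp_def e_def using Mneg by auto
  have se: "hsupp e \<subseteq> ?M" unfolding e_def by (auto split: if_splits)
  have ae: "anti_wo (hsupp e)" using anti_wo_subset[OF aM se] .
  have eq: "e x = d x - Rr e x" if "x \<in> ?M" for x
  proof -
    have "W x = F (cut W Rel x) x" unfolding W_def by (rule wfrec[OF wfR])
    also have "\<dots> = d x - Rr (\<lambda>y. if x < y then e y else 0) x"
    proof -
      have "(\<lambda>y. if y \<in> ?M \<and> x < y then cut W Rel x y else 0) = (\<lambda>y. if x < y then e y else 0)"
        unfolding cut_def Rel_def e_def by auto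
      then show ?thesis unfolding F_def by simp
    qed
    also have "Rr (\<lambda>y. if x < y then e y else 0) x = Rr e x"
      by (rule Rr_local) (use ne in \<open>auto simp: negsupp_def\<close>)
    finally show ?thesis using that unfolding e_def by simp
  qed
  have "Lser e = d"
  proof
    fix x
    show "Lser e x = d x"
    proof (cases "x \<in> ?M")
      case True
      then show ?thesis using Lser_split[OF fin_hpow[OF ae ne]] eq[OF True] by simp
    next
      case False
      have "mon (hsupp e) \<subseteq> ?M"
      proof
        fix z assume "z \<in> mon (hsupp e)"
        show "z \<in> ?M"
          by (rule mon_subset[of "hsupp e" "\<lambda>x. x \<in> ?M", OF _ _ \<open>z \<in> mon (hsupp e)\<close>]) (use se mon_add in auto)
      qed
      then have "Lser e x = 0" using Lser_mon False by blast
      moreover have "d x = 0" using False mon_base[of x "hsupp d"] by auto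
      ultimately show ?thesis by simp
    qed
  qed
  then show ?thesis using se by blast
qed




lemma hval_eq: "m \<in> hsupp a \<Longrightarrow> (\<forall>t\<in>hsupp a. t \<le> m) \<Longrightarrow> hval a = m"
  unfolding hval_def by (rule the_equality) (auto intro: order.antisym)

lemma hval_ex:
  assumes "anti_wo (hsupp a)" "a \<noteq> hzero"
  shows "hval a \<in> hsupp a \<and> (\<forall>t\<in>hsupp a. t \<le> hval a)"
proof -
  have "hsupp a \<noteq> {}" using assms(2) unfolding hzero_def hsupp_def by auto
  then obtain m where "m \<in> hsupp a" "\<forall>t\<in>hsupp a. t \<le> m" using anti_wo_max[OF assms(1) subset_refl] by blast
  then show ?thesis using hval_eq by metis
qed

lemma subgroup_diff: "subgroup_of H \<Longrightarrow> x \<in> H \<Longrightarrow> y \<in> H \<Longrightarrow> x - y \<in> H"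
  unfolding subgroup_of_def by (metis diff_conv_add_uminus)

lemma subgroup_add: "subgroup_of H \<Longrightarrow> x \<in> H \<Longrightarrow> y \<in> H \<Longrightarrow> x + y \<in> H"
  unfolding subgroup_of_def by blast

lemma subgroup_zero: "subgroup_of H \<Longrightarrow> 0 \<in> H"
  unfolding subgroup_of_def by blast

definition epsof :: "('u::linordered_ab_group_add \<Rightarrow> 'k::linordered_field) \<Rightarrow> 'u \<Rightarrow> 'k" where "epsof a = hsub (\<lambda>h. a (h + hval a) / a (hval a)) (hconst 1)"

lemma hLog_eq: "hLog (lg::'k::linordered_field\<Rightarrow>'k) (lam :: 'u::linordered_ab_group_add \<Rightarrow> 'u \<Rightarrow> 'k) a = hadd (hadd (lam (hval a)) (hconst (lg (a (hval a))))) (Lser (epsof a))"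
  unfolding hLog_def Let_def Lser_def epsof_def ..

locale tower =
  fixes G :: "'u::linordered_ab_group_add set" and l :: "'u \<Rightarrow> 'u \<Rightarrow> 'k::linordered_field"
    and H :: "nat \<Rightarrow> 'u set" and lam :: "'u \<Rightarrow> 'u \<Rightarrow> 'k"
  assumes sgG: "subgroup_of G" and T: "EL_tower G l H lam"
begin

lemma H0: "H 0 = G" using T unfolding EL_tower_def by blast
lemma lam_l: "g \<in> G \<Longrightarrow> lam g = l g" using T unfolding EL_tower_def by blast
lemma HSuc: "H n \<subseteq> H (Suc n)" using T unfolding EL_tower_def by blast
lemma Hmono: "n \<le> m \<Longrightarrow> H n \<subseteq> H m"
proof (induct m)
  case (Suc m)
  then show ?case using HSuc[of m] by (cases "n = Suc m") (auto simp: le_Suc_eq)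
qed simp
lemma sg: "subgroup_of (H n)"
  using T sgG unfolding EL_tower_def by (cases n) (auto simp: H0)
lemma bij: "bij_betw lam (H (Suc n)) (hahn {g\<in>H n. 0 < g})" using T unfolding EL_tower_def by blast
lemma lam_add: "x \<in> H (Suc n) \<Longrightarrow> y \<in> H (Suc n) \<Longrightarrow> lam (x + y) = hadd (lam x) (lam y)"
  using T unfolding EL_tower_def by blast
lemma lam_mono: "x \<in> H (Suc n) \<Longrightarrow> y \<in> H (Suc n) \<Longrightarrow> x < y \<Longrightarrow> hless (lam x) (lam y)"
  using T unfolding EL_tower_def by blast
lemma lam_in: "m \<in> H (Suc n) \<Longrightarrow> lam m \<in> hahn {g\<in>H n. 0 < g}"
  using bij_betw_apply[OF bij] .
lemma lam_inj: "inj_on lam (H (Suc n))" using bij bij_betw_def by blast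
lemma lam_pos: "m \<in> H n \<Longrightarrow> lam m g \<noteq> 0 \<Longrightarrow> 0 < g"
proof -
  assume "m \<in> H n" "lam m g \<noteq> 0"
  then have "m \<in> H (Suc n)" using HSuc by blast
  then have "lam m \<in> hahn {g\<in>H n. 0 < g}" by (rule lam_in)
  then show "0 < g" using \<open>lam m g \<noteq> 0\<close> unfolding hahn_def by auto
qed

lemma hahn_mono: "S \<subseteq> T \<Longrightarrow> hahn S \<subseteq> hahn T"
  unfolding hahn_def by auto

lemma ELser_iff: "a \<in> ELser H \<longleftrightarrow> (\<exists>n. a \<in> hahn (H n))"
  unfolding ELser_def by blast


lemma decomp:
  fixes a :: "'u \<Rightarrow> 'k"
  assumes a: "a \<in> hahn (H n)" "hpos a"
  shows "hval a \<in> H n" "0 < a (hval a)" "negsupp (epsof a)" "anti_wo (hsupp (epsof a))"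
    "hsupp (epsof a) \<subseteq> H n"
    "\<And>x. a x = a (hval a) * (epsof a (x - hval a) + hconst 1 (x - hval a))"
proof -
  let ?m = "hval a" let ?c = "a (hval a)"
  have aw: "anti_wo (hsupp a)" and sH: "hsupp a \<subseteq> H n" using a(1) unfolding hahn_def by auto
  have nz: "a \<noteq> hzero" using a(2) unfolding hpos_def by blast
  have m: "?m \<in> hsupp a" "\<forall>t\<in>hsupp a. t \<le> ?m" using hval_ex[OF aw nz] by auto
  show mH: "?m \<in> H n" using m sH by blast
  show c: "0 < ?c" using a(2) unfolding hpos_def by blast
  have ep: "epsof a h = a (h + ?m) / ?c - hconst 1 h" for h unfolding epsof_def hsub_def by simp
  have "?c \<noteq> 0" using less_imp_neq[OF c] by simp
  then have ep0: "epsof a 0 = 0" by (simp add: ep hconst_def)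
  have epnz: "epsof a h \<noteq> 0 \<Longrightarrow> h \<noteq> 0 \<and> h + ?m \<in> hsupp a" for h
    using ep0 by (auto simp: ep hconst_def split: if_splits)
  show ns: "negsupp (epsof a)" unfolding negsupp_def
  proof (intro allI impI)
    fix h assume "epsof a h \<noteq> 0"
    then have "h \<noteq> 0" "h + ?m \<le> ?m" using epnz m(2) by blast+
    then show "h < 0" by (simp add: order_le_less)
  qed
  have "hsupp (epsof a) \<subseteq> (\<lambda>x. x - ?m) ` hsupp a"
  proof
    fix h assume "h \<in> hsupp (epsof a)"
    then have "h + ?m \<in> hsupp a" using epnz by simp
    then show "h \<in> (\<lambda>x. x - ?m) ` hsupp a" by (rule rev_image_eqI) simp
  qed
  moreover have "anti_wo ((\<lambda>x. x - ?m) ` hsupp a)" by (rule anti_wo_image[OF aw]) simp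
  ultimately show "anti_wo (hsupp (epsof a))" by (rule anti_wo_subset[rotated])
  show "hsupp (epsof a) \<subseteq> H n"
  proof
    fix h assume "h \<in> hsupp (epsof a)"
    then have "epsof a h \<noteq> 0" by simp
    then have "h + ?m \<in> hsupp a" using epnz by blast
    then have "h + ?m \<in> H n" using sH by blast
    then have "(h + ?m) - ?m \<in> H n" using subgroup_diff[OF sg _ mH] by blast
    then show "h \<in> H n" by simp
  qed
  fix x
  have "epsof a (x - ?m) + hconst 1 (x - ?m) = a x / ?c" by (simp add: ep)
  then show "a x = ?c * (epsof a (x - ?m) + hconst 1 (x - ?m))" using c by simp
qed

lemma log_inj_on: "bij_betw lg {x. 0 < x} UNIV \<Longrightarrow> inj_on lg {x::'k. 0 < x}"
  by (simp add: bij_betw_def)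

lemma Log_inj:
  fixes lg :: "'k \<Rightarrow> 'k"
  assumes lb: "bij_betw lg {x::'k. 0 < x} UNIV"
    and a: "a \<in> ELser H" "hpos a" and b: "b \<in> ELser H" "hpos b"
    and eq: "hLog lg lam a = hLog lg lam b"
  shows "a = b"
proof -
  obtain n1 where n1: "a \<in> hahn (H n1)" using a ELser_iff by blast
  obtain n2 where n2: "b \<in> hahn (H n2)" using b ELser_iff by blast
  let ?N = "max n1 n2"
  have aN: "a \<in> hahn (H ?N)" using n1 hahn_mono[OF Hmono[of n1 ?N]] by auto
  have bN: "b \<in> hahn (H ?N)" using n2 hahn_mono[OF Hmono[of n2 ?N]] by auto
  note da = decomp[OF aN a(2)] and db = decomp[OF bN b(2)]
  let ?ma = "hval a" and ?mb = "hval b" and ?ca = "a (hval a)" and ?cb = "b (hval b)"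
  have L: "hLog lg lam a g = lam ?ma g + hconst (lg ?ca) g + Lser (epsof a) g"
    "hLog lg lam b g = lam ?mb g + hconst (lg ?cb) g + Lser (epsof b) g" for g
    by (simp_all add: hLog_eq hadd_def)
  have pa: "lam ?ma g \<noteq> 0 \<Longrightarrow> 0 < g" "lam ?mb g \<noteq> 0 \<Longrightarrow> 0 < g" for g
    using lam_pos[OF da(1)] lam_pos[OF db(1)] by blast+
  have ea: "Lser (epsof a) g \<noteq> 0 \<Longrightarrow> g < 0" "Lser (epsof b) g \<noteq> 0 \<Longrightarrow> g < 0" for g
    using Lser_negsupp[OF da(3)] Lser_negsupp[OF db(3)] unfolding negsupp_def by blast+
  have c0: "hconst c g = (if g = 0 then c else 0)" for c :: 'k and g :: 'u by (simp add: hconst_def)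
  have lm: "lam ?ma = lam ?mb"
  proof
    fix g
    show "lam ?ma g = lam ?mb g"
    proof (cases "0 < g")
      case True
      then have "Lser (epsof a) g = 0" "Lser (epsof b) g = 0" "g \<noteq> 0" using ea by force+
      then show ?thesis using L[of g] eq c0 by simp
    next
      case False
      then show ?thesis using pa by force
    qed
  qed
  have "?ma \<in> H (Suc ?N)" "?mb \<in> H (Suc ?N)" using da(1) db(1) HSuc by blast+
  then have meq: "?ma = ?mb" using lam_inj lm unfolding inj_on_def by blast
  have "lg ?ca = lg ?cb"
  proof -
    have "lam ?ma 0 = 0" "lam ?mb 0 = 0" "Lser (epsof a) 0 = 0" "Lser (epsof b) 0 = 0"
      using pa ea by force+
    then show ?thesis using L[of 0] eq c0 by simp
  qed
  then have ceq: "?ca = ?cb" using log_inj_on[OF lb] da(2) db(2) unfolding inj_on_def by blast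
  have "Lser (epsof a) = Lser (epsof b)"
  proof
    fix g
    show "Lser (epsof a) g = Lser (epsof b) g"
    proof (cases "g < 0")
      case True
      then have "lam ?ma g = 0" "lam ?mb g = 0" "g \<noteq> 0" using pa by force+
      then show ?thesis using L[of g] eq c0 by simp
    next
      case False
      then show ?thesis using ea by force
    qed
  qed
  then have "epsof a = epsof b" using Lser_inj da(3,4) db(3,4) by blast
  then show "a = b" using da(6) db(6) meq ceq by (intro ext) metis
qed

lemma Log_surj:
  fixes lg :: "'k \<Rightarrow> 'k"
  assumes lb: "bij_betw lg {x::'k. 0 < x} UNIV" and b: "b \<in> ELser H"
  shows "\<exists>a\<in>ELser H. hpos a \<and> hLog lg lam a = b"
proof -
  obtain n where bn: "b \<in> hahn (H n)" using b ELser_iff by blast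
  then have bw: "anti_wo (hsupp b)" and bH: "hsupp b \<subseteq> H n" unfolding hahn_def by auto
  define bp where "bp g = (if 0 < g then b g else 0)" for g
  define bm where "bm g = (if g < 0 then b g else 0)" for g
  have "hsupp bp \<subseteq> hsupp b" "hsupp bm \<subseteq> hsupp b" unfolding bp_def bm_def by (auto split: if_splits)
  then have bpw: "anti_wo (hsupp bp)" and bmw: "anti_wo (hsupp bm)" using anti_wo_subset[OF bw] by auto
  have "bp \<in> hahn {g\<in>H n. 0 < g}" unfolding hahn_def using bpw bH by (auto simp: bp_def split: if_splits)
  then obtain m where m: "m \<in> H (Suc n)" "lam m = bp" using bij unfolding bij_betw_def by (metis imageE)
  obtain c where c: "0 < c" "lg c = b 0" using lb unfolding bij_betw_def by (metis UNIV_I imageE mem_Collect_eq)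
  have nbm: "negsupp bm" unfolding negsupp_def bm_def by auto
  obtain e where e: "hsupp e \<subseteq> mon (hsupp bm)" "Lser e = bm" using Lser_surj[OF bmw nbm] by blast
  have Mn: "mon (hsupp bm) \<subseteq> H n \<inter> {x. x < 0}"
  proof
    fix z assume "z \<in> mon (hsupp bm)"
    show "z \<in> H n \<inter> {x. x < 0}"
      by (rule mon_subset[of "hsupp bm" "\<lambda>x. x \<in> H n \<inter> {x. x < 0}", OF _ _ \<open>z \<in> mon (hsupp bm)\<close>])
        (use bH sg[of n] in \<open>auto simp: bm_def subgroup_add add_neg_neg split: if_splits\<close>)
  qed
  have aM: "anti_wo (mon (hsupp bm))" by (rule neumann_wo[OF bmw]) (use nbm in \<open>auto simp: negsupp_def\<close>)
  have ew: "anti_wo (hsupp e)" using anti_wo_subset[OF aM e(1)] .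
  have ne: "negsupp e" using e(1) Mn unfolding negsupp_def by auto
  have eH: "hsupp e \<subseteq> H n" using e(1) Mn by auto
  have e0: "e 0 = 0" using ne unfolding negsupp_def by blast
  define a where "a x = c * (e (x - m) + hconst 1 (x - m))" for x
  have am: "a m = c" using e0 by (simp add: a_def hconst_def)
  have suppa: "hsupp a \<subseteq> (\<lambda>x. x + m) ` insert 0 (hsupp e)"
  proof
    fix x assume "x \<in> hsupp a"
    then have "x - m \<in> insert 0 (hsupp e)" unfolding a_def hconst_def by (auto split: if_splits)
    then show "x \<in> (\<lambda>x. x + m) ` insert 0 (hsupp e)" by (rule rev_image_eqI) simp
  qed
  have aw: "anti_wo (hsupp a)"
    by (rule anti_wo_subset[OF anti_wo_image[OF anti_wo_insert[OF ew]] suppa]) simp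
  have mH: "m \<in> H (Suc n)" using m(1) .
  have aH: "hsupp a \<subseteq> H (Suc n)"
  proof
    fix x assume "x \<in> hsupp a"
    then obtain y where y: "y \<in> insert 0 (hsupp e)" "x = y + m" using suppa by blast
    have "insert 0 (hsupp e) \<subseteq> H (Suc n)" using eH HSuc[of n] subgroup_zero[OF sg[of "Suc n"]] by blast
    then have "y \<in> H (Suc n)" using y(1) by blast
    then show "x \<in> H (Suc n)" using y(2) subgroup_add[OF sg mH, of y] by (metis add.commute)
  qed
  have aEL: "a \<in> ELser H" unfolding ELser_iff hahn_def using aw aH by blast
  have hv: "hval a = m"
  proof (rule hval_eq)
    show "m \<in> hsupp a" using am c by simp
    show "\<forall>t\<in>hsupp a. t \<le> m"
    proof
      fix t assume "t \<in> hsupp a"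
      then have "t - m \<in> insert 0 (hsupp e)" using suppa by auto
      then have "t - m \<le> 0" using ne unfolding negsupp_def by (auto simp: order_le_less)
      then show "t \<le> m" by simp
    qed
  qed
  have "a m \<noteq> 0" using am c by simp
  then have "a \<noteq> hzero" unfolding hzero_def by (metis)
  then have hp: "hpos a" unfolding hpos_def hv am using c by simp
  have "epsof a = e" unfolding epsof_def hv am
    by (rule ext) (use c in \<open>simp add: hsub_def a_def\<close>)
  then have "hLog lg lam a = b"
    unfolding hLog_eq hv am m(2) e(2) c(2)
  proof (intro ext)
    fix g
    show "hadd (hadd bp (hconst (b 0))) (Lser (epsof a)) g = b g"
      unfolding \<open>epsof a = e\<close> e(2) by (auto simp: hadd_def bp_def bm_def hconst_def dest: less_asym)
  qed
  then show ?thesis using aEL hp by blast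
qed

end




lemma sext_supp: "sext f a h \<noteq> 0 \<Longrightarrow> \<exists>x. a x \<noteq> 0 \<and> f x = h"
proof -
  assume "sext f a h \<noteq> 0"
  then obtain x where "x \<in> {g. a g \<noteq> 0 \<and> f g = h}" unfolding sext_def
    by (meson sum.not_neutral_contains_not_neutral)
  then show ?thesis by blast
qed

lemma sext_cong: "(\<And>x. a x \<noteq> 0 \<Longrightarrow> f x = f' x) \<Longrightarrow> sext f a = sext f' a"
proof -
  assume a: "\<And>x. a x \<noteq> 0 \<Longrightarrow> f x = f' x"
  have "{g. a g \<noteq> 0 \<and> f g = h} = {g. a g \<noteq> 0 \<and> f' g = h}" for h using a by auto
  then show ?thesis unfolding sext_def by simp
qed

lemma sext_monom: "sext f (monom g) = (monom (f g) :: 'v \<Rightarrow> 'k::{comm_monoid_add,zero_neq_one})"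
proof
  fix h
  have "{x. monom g x \<noteq> (0::'k) \<and> f x = h} = (if f g = h then {g} else {})"
    by (auto simp: monom_def)
  then show "sext f (monom g) h = (monom (f g) :: 'v \<Rightarrow> 'k) h" unfolding sext_def by (simp add: monom_def)
qed

lemma hsummable_cong: "(\<And>i. i \<in> I \<Longrightarrow> F i = F' i) \<Longrightarrow> hsummable F I = hsummable F' I"
proof -
  assume a: "\<And>i. i \<in> I \<Longrightarrow> F i = F' i"
  have U: "(\<Union>i\<in>I. hsupp (F i)) = (\<Union>i\<in>I. hsupp (F' i))" using a by simp
  have S: "{i\<in>I. F i g \<noteq> 0} = {i\<in>I. F' i g \<noteq> 0}" for g using a by auto
  show ?thesis unfolding hsummable_def U S ..
qed

lemma hsum_cong: "(\<And>i. i \<in> I \<Longrightarrow> F i = F' i) \<Longrightarrow> hsum F I = hsum F' I"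
proof -
  assume a: "\<And>i. i \<in> I \<Longrightarrow> F i = F' i"
  show ?thesis
  proof
    fix g
    have S: "{i\<in>I. F i g \<noteq> 0} = {i\<in>I. F' i g \<noteq> 0}" using a by auto
    show "hsum F I g = hsum F' I g" unfolding hsum_def S by (rule sum.cong) (auto simp: a)
  qed
qed

lemma hsum_nz: "hsum F I g \<noteq> 0 \<Longrightarrow> \<exists>i\<in>I. F i g \<noteq> 0"
proof -
  assume "hsum F I g \<noteq> 0"
  then obtain i where "i \<in> {i\<in>I. F i g \<noteq> 0}" unfolding hsum_def
    by (meson sum.not_neutral_contains_not_neutral)
  then show ?thesis by blast
qed

lemma anti_wo_preimage:
  assumes "anti_wo B" "\<forall>x\<in>A. \<forall>y\<in>A. x < y \<longrightarrow> f x < f y"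
  shows "anti_wo {x\<in>A. f x \<in> B}"
  unfolding anti_wo_def
proof (intro allI impI)
  fix T assume T: "T \<subseteq> {x\<in>A. f x \<in> B}" "T \<noteq> {}"
  have "f ` T \<subseteq> B" "f ` T \<noteq> {}" using T by auto
  then obtain M where M: "M \<in> f ` T" "\<forall>t\<in>f ` T. t \<le> M" using anti_wo_max[OF assms(1)] by meson
  then obtain t0 where t0: "t0 \<in> T" "M = f t0" by blast
  have "\<forall>t\<in>T. t \<le> t0"
  proof
    fix t assume "t \<in> T"
    show "t \<le> t0"
    proof (rule ccontr)
      assume "\<not> t \<le> t0"
      then have "t0 < t" by simp
      then have "f t0 < f t" using assms(2) T(1) t0(1) \<open>t \<in> T\<close> by blast
      moreover have "f t \<le> M" using M(2) \<open>t \<in> T\<close> by blast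
      ultimately show False using t0(2) by simp
    qed
  qed
  then show "\<exists>m\<in>T. \<forall>t\<in>T. t \<le> m" using t0 by blast
qed

locale ghom =
  fixes D :: "'u::linordered_ab_group_add set" and f :: "'u \<Rightarrow> 'v::linordered_ab_group_add"
  assumes sgD: "subgroup_of D"
    and hom: "\<forall>x\<in>D. \<forall>y\<in>D. f (x + y) = f x + f y"
    and mono: "\<forall>x\<in>D. \<forall>y\<in>D. x < y \<longrightarrow> f x < f y"
begin

lemma inj: "inj_on f D"
proof (rule inj_onI)
  fix x y assume "x \<in> D" "y \<in> D" "f x = f y"
  then show "x = y" using mono by (metis less_irrefl neq_iff)
qed

lemma f0: "f 0 = 0"
proof -
  have "0 \<in> D" using sgD subgroup_zero by blast
  then have "f (0 + 0) = f 0 + f 0" using hom by blast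
  then show ?thesis by simp
qed

lemma fdiff: "x \<in> D \<Longrightarrow> y \<in> D \<Longrightarrow> f (x - y) = f x - f y"
proof -
  assume "x \<in> D" "y \<in> D"
  then have "x - y \<in> D" using subgroup_diff[OF sgD] by blast
  then have "f ((x - y) + y) = f (x - y) + f y" using hom \<open>y \<in> D\<close> by blast
  then show ?thesis by (simp add: algebra_simps)
qed

lemma fzero_iff: "x \<in> D \<Longrightarrow> f x = 0 \<longleftrightarrow> x = 0"
  using inj f0 subgroup_zero[OF sgD] unfolding inj_on_def by metis

lemma fpos_iff: "x \<in> D \<Longrightarrow> 0 < f x \<longleftrightarrow> 0 < x"
proof -
  assume x: "x \<in> D"
  have z: "0 \<in> D" using subgroup_zero[OF sgD] .
  show ?thesis
  proof
    assume "0 < f x"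
    show "0 < x"
    proof (rule ccontr)
      assume "\<not> 0 < x"
      then have "x < 0 \<or> x = 0" by auto
      then show False using mono x z f0 \<open>0 < f x\<close> by (metis less_asym less_irrefl)
    qed
  next
    assume "0 < x" then show "0 < f x" using mono x z f0 by metis
  qed
qed

definition "dom_in a \<longleftrightarrow> (\<forall>x. a x \<noteq> 0 \<longrightarrow> x \<in> D)"

lemma sext_at: "dom_in a \<Longrightarrow> x \<in> D \<Longrightarrow> sext f a (f x) = a x"
proof -
  assume a: "dom_in a" "x \<in> D"
  have S: "{g. a g \<noteq> 0 \<and> f g = f x} = (if a x \<noteq> 0 then {x} else {})"
    using a inj unfolding dom_in_def inj_on_def by auto
  show ?thesis unfolding sext_def S by simp
qed

lemma sext_out: "dom_in a \<Longrightarrow> h \<notin> f ` D \<Longrightarrow> sext f a h = 0"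
proof -
  assume a: "dom_in a" "h \<notin> f ` D"
  then have S: "{g. a g \<noteq> 0 \<and> f g = h} = {}" unfolding dom_in_def by auto
  show ?thesis unfolding sext_def S by simp
qed

lemma sext_eqI:
  assumes "dom_in a" "\<And>x. x \<in> D \<Longrightarrow> P (f x) = a x" "\<And>h. h \<notin> f ` D \<Longrightarrow> P h = 0"
  shows "sext f a = P"
proof
  fix h
  show "sext f a h = P h"
  proof (cases "h \<in> f ` D")
    case True
    then obtain x where "x \<in> D" "h = f x" by blast
    then show ?thesis using sext_at assms by simp
  next
    case False
    then show ?thesis using sext_out assms by simp
  qed
qed

lemma dom_in_hadd: "dom_in a \<Longrightarrow> dom_in b \<Longrightarrow> dom_in (hadd a b :: 'u \<Rightarrow> 'k::comm_ring_1)"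
  unfolding dom_in_def hadd_def by (metis add.right_neutral)
lemma dom_in_hsub: "dom_in a \<Longrightarrow> dom_in b \<Longrightarrow> dom_in (hsub a b :: 'u \<Rightarrow> 'k::comm_ring_1)"
  unfolding dom_in_def hsub_def by (metis diff_zero)
lemma dom_in_hscale: "dom_in a \<Longrightarrow> dom_in (hscale c a :: 'u \<Rightarrow> 'k::comm_ring_1)"
  unfolding dom_in_def hscale_def by (metis mult_zero_right)
lemma dom_in_hconst: "dom_in (hconst c)"
  unfolding dom_in_def hconst_def using subgroup_zero[OF sgD] by auto
lemma dom_in_hmul: "dom_in a \<Longrightarrow> dom_in b \<Longrightarrow> dom_in (hmul a b)"
  unfolding dom_in_def
proof (intro allI impI)
  fix x assume a: "\<forall>x. a x \<noteq> 0 \<longrightarrow> x \<in> D" "\<forall>x. b x \<noteq> 0 \<longrightarrow> x \<in> D" "hmul a b x \<noteq> 0"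
  then obtain y where "a y \<noteq> 0" "b (x - y) \<noteq> 0" using hmul_nz by blast
  then have "y \<in> D" "x - y \<in> D" using a by auto
  then have "(x - y) + y \<in> D" using subgroup_add[OF sgD] by blast
  then show "x \<in> D" by simp
qed
lemma dom_in_hpow: "dom_in a \<Longrightarrow> dom_in (hpow a i)"
  by (induct i) (auto simp: hpow_Suc dom_in_hmul dom_in_hconst)
lemma dom_in_hsum: "(\<And>i. i \<in> I \<Longrightarrow> dom_in (F i)) \<Longrightarrow> dom_in (hsum F I)"
  unfolding dom_in_def using hsum_nz by metis
lemma dom_in_hahn: "a \<in> hahn S \<Longrightarrow> S \<subseteq> D \<Longrightarrow> dom_in a"
  unfolding dom_in_def hahn_def by auto

lemma sext_hadd: "dom_in (a :: 'u \<Rightarrow> 'k::comm_ring_1) \<Longrightarrow> dom_in b \<Longrightarrow> sext f (hadd a b) = hadd (sext f a) (sext f b)"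
  by (rule sext_eqI[OF dom_in_hadd]) (auto simp: sext_at sext_out hadd_def)
lemma sext_hsub: "dom_in (a :: 'u \<Rightarrow> 'k::comm_ring_1) \<Longrightarrow> dom_in b \<Longrightarrow> sext f (hsub a b) = hsub (sext f a) (sext f b)"
  by (rule sext_eqI[OF dom_in_hsub]) (auto simp: sext_at sext_out hsub_def)
lemma sext_hscale: "dom_in (a :: 'u \<Rightarrow> 'k::comm_ring_1) \<Longrightarrow> sext f (hscale c a) = hscale c (sext f a)"
  by (rule sext_eqI[OF dom_in_hscale]) (auto simp: sext_at sext_out hscale_def)
lemma sext_hconst: "sext f (hconst c) = hconst c"
proof (rule sext_eqI)
  show "dom_in (hconst c)" by (rule dom_in_hconst)
  fix x assume "x \<in> D" then show "hconst c (f x) = hconst c x" using fzero_iff by (simp add: hconst_def)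
next
  fix h assume "h \<notin> f ` D"
  then have "h \<noteq> 0" using f0 subgroup_zero[OF sgD] by force
  then show "hconst c h = 0" by (simp add: hconst_def)
qed

lemma sext_hmul:
  fixes a b :: "'u \<Rightarrow> 'k::comm_ring"
  assumes da: "dom_in a" and db: "dom_in b"
  shows "sext f (hmul a b) = hmul (sext f a) (sext f b)"
proof (rule sext_eqI)
  show "dom_in (hmul a b)" using dom_in_hmul[OF da db] .
next
  fix x assume x: "x \<in> D"
  let ?A = "{y. a y \<noteq> 0 \<and> b (x - y) \<noteq> 0}"
  let ?B = "{z. sext f a z \<noteq> 0 \<and> sext f b (f x - z) \<noteq> 0}"
  have AD: "?A \<subseteq> D" using da unfolding dom_in_def by auto
  have sa: "y \<in> D \<Longrightarrow> sext f a (f y) = a y" for y using sext_at[OF da] .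
  have sb: "y \<in> D \<Longrightarrow> sext f b (f y) = b y" for y using sext_at[OF db] .
  have B: "?B = f ` ?A"
  proof (intro set_eqI iffI)
    fix z assume z: "z \<in> ?B"
    then have z1: "sext f a z \<noteq> 0" and z2: "sext f b (f x - z) \<noteq> 0" by auto
    obtain y where y: "a y \<noteq> 0" "f y = z" using sext_supp[OF z1] by blast
    then have yD: "y \<in> D" using da unfolding dom_in_def by auto
    then have e1: "f x - z = f (x - y)" using fdiff[OF x yD] y by simp
    have xyD: "x - y \<in> D" using subgroup_diff[OF sgD x yD] .
    have "sext f b (f (x - y)) \<noteq> 0" using z2 e1 by simp
    then have "b (x - y) \<noteq> 0" using sb[OF xyD] by simp
    then show "z \<in> f ` ?A" using y by blast
  next
    fix z assume "z \<in> f ` ?A"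
    then obtain y where y: "a y \<noteq> 0" "b (x - y) \<noteq> 0" "z = f y" by blast
    then have yD: "y \<in> D" using da unfolding dom_in_def by auto
    have e1: "f x - z = f (x - y)" using fdiff[OF x yD] y by simp
    have xyD: "x - y \<in> D" using subgroup_diff[OF sgD x yD] .
    have "sext f b (f x - z) \<noteq> 0" unfolding e1 using sb[OF xyD] y by simp
    moreover have "sext f a z \<noteq> 0" using sa[OF yD] y by simp
    ultimately show "z \<in> ?B" by blast
  qed
  have "hmul (sext f a) (sext f b) (f x) = (\<Sum>z\<in>f ` ?A. sext f a z * sext f b (f x - z))"
    unfolding hmul_def B ..
  also have "\<dots> = (\<Sum>y\<in>?A. sext f a (f y) * sext f b (f x - f y))"
    by (rule sum.reindex_cong[of f, OF inj_on_subset[OF inj AD] refl]) simp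
  also have "\<dots> = (\<Sum>y\<in>?A. a y * b (x - y))"
  proof (rule sum.cong[OF refl])
    fix y assume "y \<in> ?A"
    then have yD: "y \<in> D" using AD by blast
    have xyD: "x - y \<in> D" using subgroup_diff[OF sgD x yD] .
    have "sext f b (f x - f y) = b (x - y)" using sb[OF xyD] fdiff[OF x yD] by simp
    then show "sext f a (f y) * sext f b (f x - f y) = a y * b (x - y)"
      using sa[OF yD] by simp
  qed
  finally show "hmul (sext f a) (sext f b) (f x) = hmul a b x" unfolding hmul_def by simp
next
  fix h assume h: "h \<notin> f ` D"
  have E: "{z. sext f a z \<noteq> 0 \<and> sext f b (h - z) \<noteq> 0} = {}"
  proof (rule ccontr)
    assume "\<not> ?thesis"
    then obtain z where z: "sext f a z \<noteq> 0" "sext f b (h - z) \<noteq> 0" by blast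
    obtain y where y: "a y \<noteq> 0" "f y = z" using sext_supp[OF z(1)] by blast
    obtain w where w: "b w \<noteq> 0" "f w = h - z" using sext_supp[OF z(2)] by blast
    have "y \<in> D" "w \<in> D" using y w da db unfolding dom_in_def by auto
    then have "f (w + y) = h" using hom y w by simp
    moreover have "w + y \<in> D" using subgroup_add[OF sgD \<open>w \<in> D\<close> \<open>y \<in> D\<close>] .
    ultimately show False using h by blast
  qed
  show "hmul (sext f a) (sext f b) h = 0" unfolding hmul_def E by simp
qed

lemma sext_hpow:
  fixes a :: "'u \<Rightarrow> 'k::comm_ring_1"
  assumes "dom_in a"
  shows "sext f (hpow a i) = hpow (sext f a) i"
proof (induct i)
  case 0 then show ?case by (simp add: sext_hconst)
next
  case (Suc i)
  then show ?case using sext_hmul[OF assms dom_in_hpow[OF assms]] by (simp add: hpow_Suc)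
qed

lemma sext_hsum:
  assumes "\<And>i. i \<in> I \<Longrightarrow> dom_in (F i)"
  shows "sext f (hsum F I) = hsum (\<lambda>i. sext f (F i)) I"
proof (rule sext_eqI)
  show "dom_in (hsum F I)" using dom_in_hsum assms .
next
  fix x assume x: "x \<in> D"
  have S: "{i\<in>I. sext f (F i) (f x) \<noteq> 0} = {i\<in>I. F i x \<noteq> 0}" using sext_at[OF assms x] by auto
  show "hsum (\<lambda>i. sext f (F i)) I (f x) = hsum F I x"
    unfolding hsum_def S by (rule sum.cong) (auto simp: sext_at[OF assms x])
next
  fix h assume "h \<notin> f ` D"
  then have "{i\<in>I. sext f (F i) h \<noteq> 0} = {}" using sext_out[OF assms] by auto
  then show "hsum (\<lambda>i. sext f (F i)) I h = 0" unfolding hsum_def by simp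
qed

lemma sext_supp_eq: "dom_in a \<Longrightarrow> hsupp (sext f a) = f ` hsupp a"
proof -
  assume da: "dom_in a"
  show ?thesis
  proof (intro set_eqI iffI)
    fix h assume "h \<in> hsupp (sext f a)"
    then obtain x where "a x \<noteq> 0" "f x = h" using sext_supp by (metis hsupp_iff)
    then show "h \<in> f ` hsupp a" by auto
  next
    fix h assume "h \<in> f ` hsupp a"
    then obtain x where x: "a x \<noteq> 0" "h = f x" by auto
    then have "x \<in> D" using da unfolding dom_in_def by auto
    then show "h \<in> hsupp (sext f a)" using x sext_at[OF da] by simp
  qed
qed

lemma anti_wo_sext: "dom_in a \<Longrightarrow> anti_wo (hsupp a) \<Longrightarrow> anti_wo (hsupp (sext f a))"
proof -
  assume da: "dom_in a" "anti_wo (hsupp a)"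
  have "hsupp a \<subseteq> D" using da unfolding dom_in_def by auto
  then have "\<forall>x\<in>hsupp a. \<forall>y\<in>hsupp a. x < y \<longrightarrow> f x < f y" using mono by blast
  then show ?thesis using sext_supp_eq[OF da(1)] anti_wo_image[OF da(2)] by simp
qed

lemma hval_sext:
  fixes a :: "'u \<Rightarrow> 'k::linordered_field"
  assumes da: "dom_in a" "anti_wo (hsupp a)" and nz: "a \<noteq> hzero"
  shows "hval (sext f a) = f (hval a)"
proof (rule hval_eq)
  have m: "hval a \<in> hsupp a" "\<forall>t\<in>hsupp a. t \<le> hval a" using hval_ex[OF da(2) nz] by auto
  have mD: "hval a \<in> D" using m(1) da(1) unfolding dom_in_def by auto
  show "f (hval a) \<in> hsupp (sext f a)" using sext_supp_eq[OF da(1)] m(1) by blast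
  show "\<forall>t\<in>hsupp (sext f a). t \<le> f (hval a)"
  proof
    fix t assume "t \<in> hsupp (sext f a)"
    then obtain x where x: "x \<in> hsupp a" "t = f x" using sext_supp_eq[OF da(1)] by blast
    then have "x \<in> D" using da(1) unfolding dom_in_def by auto
    then show "t \<le> f (hval a)" using m(2) x mono mD by (metis order_le_less)
  qed
qed

lemma hpos_sext:
  fixes a :: "'u \<Rightarrow> 'k::linordered_field"
  assumes da: "dom_in a" "anti_wo (hsupp a)" and p: "hpos a"
  shows "hpos (sext f a)"
proof -
  have nz: "a \<noteq> hzero" using p unfolding hpos_def by blast
  have m: "hval a \<in> hsupp a" using hval_ex[OF da(2) nz] by auto
  have mD: "hval a \<in> D" using m da(1) unfolding dom_in_def by auto
  have "sext f a (f (hval a)) = a (hval a)" using sext_at[OF da(1) mD] .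
  moreover have "0 < a (hval a)" using p unfolding hpos_def by blast
  ultimately have p0: "0 < sext f a (f (hval a))" by simp
  have "sext f a \<noteq> hzero"
  proof
    assume "sext f a = hzero"
    then show False using p0 by (simp add: hzero_def)
  qed
  then show ?thesis unfolding hpos_def hval_sext[OF da nz] using p0 by blast
qed

end




lemma hless_irrefl: "\<not> hless a (a :: 'u::linordered_ab_group_add \<Rightarrow> 'k::linordered_field)"
  unfolding hless_def hpos_def hsub_def hzero_def by simp

lemma hless_asym:
  fixes a b :: "'u::linordered_ab_group_add \<Rightarrow> 'k::linordered_field"
  assumes "hless a b" "hless b a" shows False
proof -
  have S: "hsupp (hsub a b) = hsupp (hsub b a)" unfolding hsupp_def hsub_def by auto
  have V: "hval (hsub a b) = hval (hsub b a)" unfolding hval_def S ..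
  have "0 < hsub b a (hval (hsub b a))" "0 < hsub a b (hval (hsub a b))"
    using assms unfolding hless_def hpos_def by auto
  then have "0 < hsub b a (hval (hsub b a))" "0 < hsub a b (hval (hsub b a))" unfolding V by auto
  then show False unfolding hsub_def by simp
qed

lemma hsupp_hsub: "hsupp (hsub a b) \<subseteq> hsupp a \<union> hsupp (b :: 'u \<Rightarrow> 'k::ab_group_add)"
  unfolding hsupp_def hsub_def by auto

locale morph = t1: tower G1 l1 H1 lam1 + t2: tower G2 l2 H2 lam2
  for G1 :: "'u::linordered_ab_group_add set" and l1 :: "'u \<Rightarrow> 'u \<Rightarrow> 'k::linordered_field"
    and H1 :: "nat \<Rightarrow> 'u set" and lam1 :: "'u \<Rightarrow> 'u \<Rightarrow> 'k"
    and G2 :: "'v::linordered_ab_group_add set" and l2 :: "'v \<Rightarrow> 'v \<Rightarrow> 'k"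
    and H2 :: "nat \<Rightarrow> 'v set" and lam2 :: "'v \<Rightarrow> 'v \<Rightarrow> 'k" +
  fixes psi :: "'u \<Rightarrow> 'v"
  assumes psi_into: "\<forall>g\<in>G1. psi g \<in> G2"
    and psi_hom: "\<forall>x\<in>G1. \<forall>y\<in>G1. psi (x + y) = psi x + psi y"
    and psi_mono: "\<forall>x\<in>G1. \<forall>y\<in>G1. x < y \<longrightarrow> psi x < psi y"
    and psi_morph: "\<forall>g\<in>G1. sext psi (l1 g) = l2 (psi g)"
begin

abbreviation "fN \<equiv> psiN lam1 H2 lam2 psi"

lemma step:
  assumes gh: "ghom (H1 n) (fN n)" and into: "\<forall>g\<in>H1 n. fN n g \<in> H2 n" and g: "g \<in> H1 (Suc n)"
  shows "fN (Suc n) g \<in> H2 (Suc n) \<and> lam2 (fN (Suc n) g) = sext (fN n) (lam1 g)"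
proof -
  interpret gh: ghom "H1 n" "fN n" by (rule gh)
  let ?a = "lam1 g"
  have a: "?a \<in> hahn {x\<in>H1 n. 0 < x}" using t1.lam_in[OF g] .
  have da: "gh.dom_in ?a" by (rule gh.dom_in_hahn[OF a]) auto
  have aw: "anti_wo (hsupp ?a)" using a unfolding hahn_def by auto
  have "sext (fN n) ?a \<in> hahn {x\<in>H2 n. 0 < x}"
    unfolding hahn_def
  proof (intro CollectI conjI)
    show "hsupp (sext (fN n) ?a) \<subseteq> {x \<in> H2 n. 0 < x}"
    proof
      fix h assume "h \<in> hsupp (sext (fN n) ?a)"
      then obtain x where x: "x \<in> hsupp ?a" "h = fN n x" using gh.sext_supp_eq[OF da] by blast
      then have "x \<in> H1 n" "0 < x" using a unfolding hahn_def by auto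
      then show "h \<in> {x \<in> H2 n. 0 < x}" using x into gh.fpos_iff by auto
    qed
    show "anti_wo (hsupp (sext (fN n) ?a))" using gh.anti_wo_sext[OF da aw] .
  qed
  then have "sext (fN n) ?a \<in> lam2 ` H2 (Suc n)" using t2.bij unfolding bij_betw_def by blast
  moreover have "fN (Suc n) g = inv_into (H2 (Suc n)) lam2 (sext (fN n) ?a)" by simp
  ultimately show ?thesis by (simp add: inv_into_into f_inv_into_f)
qed

lemma all_n: "ghom (H1 n) (fN n) \<and> (\<forall>g\<in>H1 n. fN n g \<in> H2 n)"
proof (induct n)
  case 0
  have "ghom G1 psi" unfolding ghom_def using t1.sgG psi_hom psi_mono by blast
  then show ?case using psi_into t1.H0 t2.H0 by simp
next
  case (Suc n)
  then have gh: "ghom (H1 n) (fN n)" and into: "\<forall>g\<in>H1 n. fN n g \<in> H2 n" by auto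
  interpret gh: ghom "H1 n" "fN n" by (rule gh)
  note st = step[OF gh into]
  have dl: "gh.dom_in (lam1 x)" if "x \<in> H1 (Suc n)" for x
    by (rule gh.dom_in_hahn[OF t1.lam_in[OF that]]) auto
  have hom: "\<forall>x\<in>H1 (Suc n). \<forall>y\<in>H1 (Suc n). fN (Suc n) (x + y) = fN (Suc n) x + fN (Suc n) y"
  proof (intro ballI)
    fix x y assume x: "x \<in> H1 (Suc n)" and y: "y \<in> H1 (Suc n)"
    have xy: "x + y \<in> H1 (Suc n)" using subgroup_add[OF t1.sg x y] .
    have fx: "fN (Suc n) x \<in> H2 (Suc n)" and fy: "fN (Suc n) y \<in> H2 (Suc n)" using st x y by auto
    have "lam2 (fN (Suc n) (x + y)) = sext (fN n) (lam1 (x + y))" using st[OF xy] by simp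
    also have "\<dots> = sext (fN n) (hadd (lam1 x) (lam1 y))" using t1.lam_add[OF x y] by simp
    also have "\<dots> = hadd (sext (fN n) (lam1 x)) (sext (fN n) (lam1 y))"
      by (rule gh.sext_hadd[OF dl[OF x] dl[OF y]])
    also have "\<dots> = hadd (lam2 (fN (Suc n) x)) (lam2 (fN (Suc n) y))" using st x y by simp
    also have "\<dots> = lam2 (fN (Suc n) x + fN (Suc n) y)" using t2.lam_add[OF fx fy] by simp
    finally have "lam2 (fN (Suc n) (x + y)) = lam2 (fN (Suc n) x + fN (Suc n) y)" .
    moreover have "fN (Suc n) (x + y) \<in> H2 (Suc n)" using st[OF xy] by simp
    moreover have "fN (Suc n) x + fN (Suc n) y \<in> H2 (Suc n)" using subgroup_add[OF t2.sg fx fy] .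
    ultimately show "fN (Suc n) (x + y) = fN (Suc n) x + fN (Suc n) y"
      using t2.lam_inj unfolding inj_on_def by blast
  qed
  have mono: "\<forall>x\<in>H1 (Suc n). \<forall>y\<in>H1 (Suc n). x < y \<longrightarrow> fN (Suc n) x < fN (Suc n) y"
  proof (intro ballI impI)
    fix x y assume x: "x \<in> H1 (Suc n)" and y: "y \<in> H1 (Suc n)" and xy: "x < y"
    have fx: "fN (Suc n) x \<in> H2 (Suc n)" and fy: "fN (Suc n) y \<in> H2 (Suc n)" using st x y by auto
    have hl: "hpos (hsub (lam1 y) (lam1 x))" using t1.lam_mono[OF x y xy] unfolding hless_def .
    have d: "gh.dom_in (hsub (lam1 y) (lam1 x))" using gh.dom_in_hsub[OF dl[OF y] dl[OF x]] .
    have "anti_wo (hsupp (lam1 y))" "anti_wo (hsupp (lam1 x))"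
      using t1.lam_in[OF x] t1.lam_in[OF y] unfolding hahn_def by auto
    then have aw: "anti_wo (hsupp (hsub (lam1 y) (lam1 x)))"
      using anti_wo_subset[OF anti_wo_Un hsupp_hsub] by blast
    have "hpos (sext (fN n) (hsub (lam1 y) (lam1 x)))" using gh.hpos_sext[OF d aw hl] .
    moreover have "sext (fN n) (hsub (lam1 y) (lam1 x)) = hsub (lam2 (fN (Suc n) y)) (lam2 (fN (Suc n) x))"
      using gh.sext_hsub[OF dl[OF y] dl[OF x]] st x y by simp
    ultimately have hl2: "hless (lam2 (fN (Suc n) x)) (lam2 (fN (Suc n) y))" unfolding hless_def by simp
    show "fN (Suc n) x < fN (Suc n) y"
    proof (rule ccontr)
      assume "\<not> ?thesis"
      then have "fN (Suc n) y < fN (Suc n) x \<or> fN (Suc n) y = fN (Suc n) x" by auto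
      then show False
      proof
        assume "fN (Suc n) y < fN (Suc n) x"
        then have "hless (lam2 (fN (Suc n) y)) (lam2 (fN (Suc n) x))" using t2.lam_mono[OF fy fx] by blast
        then show False using hless_asym hl2 by blast
      next
        assume "fN (Suc n) y = fN (Suc n) x"
        then show False using hl2 hless_irrefl by metis
      qed
    qed
  qed
  have "ghom (H1 (Suc n)) (fN (Suc n))" unfolding ghom_def using t1.sg hom mono by blast
  then show ?case using st by blast
qed

lemma consist: "\<forall>g\<in>H1 n. fN (Suc n) g = fN n g"
proof (induct n)
  case 0
  show ?case
  proof
    fix g assume g: "g \<in> H1 0"
    then have gG: "g \<in> G1" using t1.H0 by simp
    have pG: "psi g \<in> G2" using psi_into gG by blast
    have "sext psi (lam1 g) = lam2 (psi g)" using psi_morph gG pG t1.lam_l t2.lam_l by simp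
    moreover have "psi g \<in> H2 (Suc 0)" using pG t2.H0 t2.HSuc[of 0] by auto
    ultimately show "fN (Suc 0) g = fN 0 g" using t2.lam_inj by (simp add: inv_into_f_f)
  qed
next
  case (Suc n)
  show ?case
  proof
    fix g assume g: "g \<in> H1 (Suc n)"
    have a: "lam1 g \<in> hahn {x\<in>H1 n. 0 < x}" using t1.lam_in[OF g] .
    have "sext (fN (Suc n)) (lam1 g) = sext (fN n) (lam1 g)"
      by (rule sext_cong) (use a Suc in \<open>auto simp: hahn_def hsupp_def\<close>)
    also have "\<dots> = lam2 (fN (Suc n) g)" using step[OF _ _ g] all_n[of n] by simp
    finally have e: "sext (fN (Suc n)) (lam1 g) = lam2 (fN (Suc n) g)" .
    have "fN (Suc n) g \<in> H2 (Suc (Suc n))" using step[OF _ _ g] all_n[of n] t2.HSuc by blast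
    then show "fN (Suc (Suc n)) g = fN (Suc n) g" using t2.lam_inj e by (simp add: inv_into_f_f)
  qed
qed

lemma fle: "n \<le> m \<Longrightarrow> g \<in> H1 n \<Longrightarrow> fN m g = fN n g"
proof (induct m)
  case 0 then show ?case by simp
next
  case (Suc m)
  show ?case
  proof (cases "n = Suc m")
    case False
    then have "n \<le> m" using Suc by simp
    then have "g \<in> H1 m" using t1.Hmono Suc by blast
    then show ?thesis using consist Suc \<open>n \<le> m\<close> by simp
  qed simp
qed

abbreviation "phi \<equiv> psiEL H1 lam1 H2 lam2 psi"

lemma phi_eq: "g \<in> H1 n \<Longrightarrow> phi g = fN n g"
proof -
  assume g: "g \<in> H1 n"
  let ?k = "LEAST k. g \<in> H1 k"
  have "g \<in> H1 ?k" using g by (rule LeastI)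
  moreover have "?k \<le> n" using g by (rule Least_le)
  ultimately show ?thesis unfolding psiEL_def using fle g by simp
qed

definition "D1 = (\<Union>n. H1 n)"

lemma D1_common: "x \<in> D1 \<Longrightarrow> y \<in> D1 \<Longrightarrow> \<exists>n. x \<in> H1 n \<and> y \<in> H1 n"
proof -
  assume "x \<in> D1" "y \<in> D1"
  then obtain n m where "x \<in> H1 n" "y \<in> H1 m" unfolding D1_def by blast
  then show ?thesis using t1.Hmono[of n "max n m"] t1.Hmono[of m "max n m"] by auto
qed

lemma ghD1: "ghom D1 phi"
  unfolding ghom_def
proof (intro conjI ballI impI)
  show "subgroup_of D1" unfolding subgroup_of_def
  proof (intro conjI ballI)
    show "0 \<in> D1" unfolding D1_def using subgroup_zero[OF t1.sg[of 0]] by blast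
  next
    fix x y assume "x \<in> D1" "y \<in> D1"
    then obtain n where "x \<in> H1 n" "y \<in> H1 n" using D1_common by blast
    then show "x + y \<in> D1" unfolding D1_def using subgroup_add[OF t1.sg] by blast
  next
    fix x assume "x \<in> D1"
    then obtain n where "x \<in> H1 n" unfolding D1_def by blast
    then show "- x \<in> D1" unfolding D1_def using t1.sg[of n] unfolding subgroup_of_def by blast
  qed
next
  fix x y assume "x \<in> D1" "y \<in> D1"
  then obtain n where n: "x \<in> H1 n" "y \<in> H1 n" using D1_common by blast
  then have "x + y \<in> H1 n" using subgroup_add[OF t1.sg] by blast
  then show "phi (x + y) = phi x + phi y" using n phi_eq all_n[of n] unfolding ghom_def by simp
next
  fix x y assume "x \<in> D1" "y \<in> D1" "x < y"
  then obtain n where n: "x \<in> H1 n" "y \<in> H1 n" using D1_common by blast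
  then show "phi x < phi y" using n phi_eq all_n[of n] \<open>x < y\<close> unfolding ghom_def by simp
qed

sublocale gD: ghom D1 phi by (rule ghD1)

lemma phi_H: "g \<in> H1 n \<Longrightarrow> phi g \<in> H2 n"
  using phi_eq all_n by simp

lemma H1_D1: "H1 n \<subseteq> D1" unfolding D1_def by blast

lemma lam_phi: "g \<in> D1 \<Longrightarrow> lam2 (phi g) = sext phi (lam1 g)"
proof -
  assume "g \<in> D1"
  then obtain k where "g \<in> H1 k" unfolding D1_def by blast
  then have g: "g \<in> H1 (Suc k)" using t1.HSuc by blast
  have "lam2 (fN (Suc k) g) = sext (fN k) (lam1 g)" using step[OF _ _ g] all_n[of k] by simp
  also have "\<dots> = sext phi (lam1 g)"
    by (rule sext_cong) (use t1.lam_in[OF g] phi_eq in \<open>auto simp: hahn_def hsupp_def\<close>)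
  finally show ?thesis using phi_eq[OF g] by simp
qed

lemma dom_EL: "a \<in> ELser H1 \<Longrightarrow> gD.dom_in a"
  unfolding ELser_def using gD.dom_in_hahn H1_D1 by blast

end




context morph
begin

abbreviation "Psi \<equiv> sext phi"

lemma P_in: "(a :: 'u \<Rightarrow> 'k) \<in> ELser H1 \<Longrightarrow> Psi a \<in> ELser H2"
proof -
  assume "a \<in> ELser H1"
  then obtain n where a: "a \<in> hahn (H1 n)" unfolding ELser_def by blast
  have da: "gD.dom_in a" using gD.dom_in_hahn[OF a H1_D1] .
  have "hsupp (Psi a) \<subseteq> H2 n" using gD.sext_supp_eq[OF da] a phi_H unfolding hahn_def by auto
  moreover have "anti_wo (hsupp (Psi a))" using gD.anti_wo_sext[OF da] a unfolding hahn_def by auto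
  ultimately show ?thesis unfolding ELser_def hahn_def by blast
qed

lemma P_inj: "inj_on Psi (ELser H1 :: ('u \<Rightarrow> 'k) set)"
proof (rule inj_onI)
  fix a b :: "'u \<Rightarrow> 'k" assume a: "a \<in> ELser H1" and b: "b \<in> ELser H1" and e: "Psi a = Psi b"
  have da: "gD.dom_in a" and db: "gD.dom_in b" using dom_EL a b by auto
  show "a = b"
  proof
    fix x
    show "a x = b x"
    proof (cases "x \<in> D1")
      case True
      then show ?thesis using gD.sext_at[OF da True] gD.sext_at[OF db True] e by metis
    next
      case False
      then show ?thesis using da db unfolding gD.dom_in_def by metis
    qed
  qed
qed

lemma P_hless: "(a :: 'u \<Rightarrow> 'k) \<in> ELser H1 \<Longrightarrow> b \<in> ELser H1 \<Longrightarrow> hless a b \<Longrightarrow> hless (Psi a) (Psi b)"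
proof -
  assume a: "a \<in> ELser H1" and b: "b \<in> ELser H1" and l: "hless a b"
  have da: "gD.dom_in a" and db: "gD.dom_in b" using dom_EL a b by auto
  have "anti_wo (hsupp a)" "anti_wo (hsupp b)" using a b unfolding ELser_def hahn_def by auto
  then have aw: "anti_wo (hsupp (hsub b a))" using anti_wo_subset[OF anti_wo_Un hsupp_hsub] by blast
  have "hpos (Psi (hsub b a))" using gD.hpos_sext[OF gD.dom_in_hsub[OF db da] aw] l unfolding hless_def by blast
  then show ?thesis unfolding hless_def gD.sext_hsub[OF db da] .
qed

lemma P_resp: "respects_sums (ELser H1 :: ('u \<Rightarrow> 'k) set) Psi"
  unfolding respects_sums_def
proof (intro ballI conjI)
  fix a :: "'u \<Rightarrow> 'k" assume a: "a \<in> ELser H1"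
  have da: "gD.dom_in a" using dom_EL a by auto
  have aw: "anti_wo (hsupp a)" using a unfolding ELser_def hahn_def by auto
  have sD: "hsupp a \<subseteq> D1" using da unfolding gD.dom_in_def by auto
  let ?F = "\<lambda>g. hscale (a g) (Psi (monom g :: 'u \<Rightarrow> 'k))"
  have F: "?F g h = (if phi g = h then a g else 0)" for g h
    unfolding sext_monom by (simp add: hscale_def monom_def)
  have U: "(\<Union>g\<in>hsupp a. hsupp (?F g)) \<subseteq> phi ` hsupp a"
    using F by (auto split: if_splits)
  have "anti_wo (phi ` hsupp a)" by (rule anti_wo_image[OF aw]) (use sD gD.mono in blast)
  then have U': "anti_wo (\<Union>g\<in>hsupp a. hsupp (?F g))" using anti_wo_subset U by blast
  have fin: "finite {g\<in>hsupp a. ?F g h \<noteq> 0}" for h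
  proof -
    have S: "{g\<in>hsupp a. ?F g h \<noteq> 0} = {g. a g \<noteq> 0 \<and> phi g = h}" using F by auto
    show ?thesis
    proof (cases "{g. a g \<noteq> 0 \<and> phi g = h} = {}")
      case False
      then obtain g0 where g0: "a g0 \<noteq> 0" "phi g0 = h" by blast
      have "{g. a g \<noteq> 0 \<and> phi g = h} \<subseteq> {g0}"
      proof
        fix g assume "g \<in> {g. a g \<noteq> 0 \<and> phi g = h}"
        then have "g \<in> hsupp a" "phi g = phi g0" using g0 by auto
        moreover have "g0 \<in> hsupp a" using g0 by simp
        ultimately show "g \<in> {g0}" using sD gD.inj unfolding inj_on_def by blast
      qed
      then show ?thesis unfolding S by (rule finite_subset) simp
    next
      case True
      show ?thesis unfolding S True by simp
    qed
  qed
  show "hsummable ?F (hsupp a)" unfolding hsummable_def using U' fin by blast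
  show "Psi a = hsum ?F (hsupp a)"
  proof
    fix h
    have S: "{g\<in>hsupp a. ?F g h \<noteq> 0} = {g. a g \<noteq> 0 \<and> phi g = h}" using F by auto
    have e1: "Psi a h = (\<Sum>g\<in>{g. a g \<noteq> 0 \<and> phi g = h}. a g)" by (simp add: sext_def)
    have e2: "hsum ?F (hsupp a) h = (\<Sum>g\<in>{g. a g \<noteq> 0 \<and> phi g = h}. ?F g h)" unfolding hsum_def S ..
    show "Psi a h = hsum ?F (hsupp a) h" unfolding e1 e2 by (rule sum.cong) (auto simp: F)
  qed
qed

lemma epsof_P:
  fixes a :: "'u \<Rightarrow> 'k"
  assumes a: "a \<in> hahn (H1 n)" "hpos a"
  shows "epsof (Psi a) = Psi (epsof a)"
proof -
  note dc = t1.decomp[OF a]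
  have da: "gD.dom_in a" using gD.dom_in_hahn[OF a(1) H1_D1] .
  have aw: "anti_wo (hsupp a)" using a unfolding hahn_def by auto
  have nz: "a \<noteq> hzero" using a(2) unfolding hpos_def by blast
  let ?m = "hval a" let ?c = "a (hval a)"
  have mD: "?m \<in> D1" using dc(1) H1_D1 by blast
  have hv: "hval (Psi a) = phi ?m" using gD.hval_sext[OF da aw nz] .
  have cv: "Psi a (phi ?m) = ?c" using gD.sext_at[OF da mD] .
  have de: "gD.dom_in (epsof a)" unfolding gD.dom_in_def
  proof (intro allI impI)
    fix x assume "epsof a x \<noteq> 0"
    then have "x \<in> hsupp (epsof a)" by simp
    then show "x \<in> D1" using dc(5) H1_D1 by blast
  qed
  have z1: "(0::'u) \<in> D1" using subgroup_zero[OF gD.sgD] .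
  show ?thesis
  proof (rule sym, rule gD.sext_eqI[OF de])
    fix x assume x: "x \<in> D1"
    have xm: "x + ?m \<in> D1" using subgroup_add[OF gD.sgD x mD] .
    have "phi x + phi ?m = phi (x + ?m)" using gD.hom x mD by simp
    then have "Psi a (phi x + phi ?m) = a (x + ?m)" using gD.sext_at[OF da xm] by simp
    moreover have "hconst 1 (phi x) = (hconst 1 x :: 'k)" using gD.fzero_iff[OF x] by (simp add: hconst_def)
    ultimately show "epsof (Psi a) (phi x) = epsof a x"
      unfolding epsof_def hsub_def hv cv by simp
  next
    fix h assume h: "h \<notin> phi ` D1"
    have "h + phi ?m \<notin> phi ` D1"
    proof
      assume "h + phi ?m \<in> phi ` D1"
      then obtain y where y: "y \<in> D1" "h + phi ?m = phi y" by blast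
      then have "h = phi y - phi ?m" by (simp add: eq_diff_eq)
      then have "h = phi (y - ?m)" using gD.fdiff[OF y(1) mD] by simp
      moreover have "y - ?m \<in> D1" using subgroup_diff[OF gD.sgD y(1) mD] .
      ultimately show False using h by blast
    qed
    then have "Psi a (h + phi ?m) = 0" using gD.sext_out[OF da] by blast
    moreover have "h \<noteq> 0" using h gD.f0 z1 by force
    then have "hconst 1 h = (0 :: 'k)" by (simp add: hconst_def)
    ultimately show "epsof (Psi a) h = 0" unfolding epsof_def hsub_def hv cv by simp
  qed
qed

lemma Lser_P: "gD.dom_in e \<Longrightarrow> Psi (Lser e) = Lser (Psi e)"
proof -
  assume de: "gD.dom_in e"
  have d: "gD.dom_in (hscale c (hpow e i))" for c i using gD.dom_in_hscale[OF gD.dom_in_hpow[OF de]] .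
  show ?thesis unfolding Lser_def
    by (simp add: gD.sext_hsum[OF d] gD.sext_hscale[OF gD.dom_in_hpow[OF de]] gD.sext_hpow[OF de])
qed

lemma P_Log:
  fixes lg :: "'k \<Rightarrow> 'k" and a :: "'u \<Rightarrow> 'k"
  assumes a: "a \<in> ELser H1" "hpos a"
  shows "Psi (hLog lg lam1 a) = hLog lg lam2 (Psi a)"
proof -
  obtain n where an: "a \<in> hahn (H1 n)" using a(1) unfolding ELser_def by blast
  note dc = t1.decomp[OF an a(2)]
  have da: "gD.dom_in a" using gD.dom_in_hahn[OF an H1_D1] .
  have aw: "anti_wo (hsupp a)" using an unfolding hahn_def by auto
  have nz: "a \<noteq> hzero" using a(2) unfolding hpos_def by blast
  let ?m = "hval a" let ?c = "a (hval a)"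
  have mD: "?m \<in> D1" using dc(1) H1_D1 by blast
  have hv: "hval (Psi a) = phi ?m" using gD.hval_sext[OF da aw nz] .
  have cv: "Psi a (phi ?m) = ?c" using gD.sext_at[OF da mD] .
  have de: "gD.dom_in (epsof a)" unfolding gD.dom_in_def
  proof (intro allI impI)
    fix x assume "epsof a x \<noteq> 0"
    then have "x \<in> hsupp (epsof a)" by simp
    then show "x \<in> D1" using dc(5) H1_D1 by blast
  qed
  have mS: "?m \<in> H1 (Suc n)" using dc(1) t1.HSuc by blast
  have dl: "gD.dom_in (lam1 ?m)" by (rule gD.dom_in_hahn[OF t1.lam_in[OF mS]]) (use H1_D1 in auto)
  have dL: "gD.dom_in (Lser (epsof a))" unfolding Lser_def
    by (rule gD.dom_in_hsum) (rule gD.dom_in_hscale[OF gD.dom_in_hpow[OF de]])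
  have "Psi (hLog lg lam1 a) = hadd (hadd (Psi (lam1 ?m)) (Psi (hconst (lg ?c)))) (Psi (Lser (epsof a)))"
    unfolding hLog_eq
    by (simp add: gD.sext_hadd gD.dom_in_hadd dl gD.dom_in_hconst dL)
  also have "\<dots> = hadd (hadd (lam2 (phi ?m)) (hconst (lg ?c))) (Lser (epsof (Psi a)))"
  proof -
    have "Psi (hconst (lg ?c)) = (hconst (lg ?c) :: 'v \<Rightarrow> 'k)" by (rule gD.sext_hconst)
    then show ?thesis using lam_phi[OF mD] Lser_P[OF de] epsof_P[OF an a(2)] by simp
  qed
  also have "\<dots> = hLog lg lam2 (Psi a)" unfolding hLog_eq hv cv ..
  finally show ?thesis .
qed

lemma P_Exp:
  fixes lg :: "'k \<Rightarrow> 'k" and a :: "'u \<Rightarrow> 'k"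
  assumes lb: "bij_betw lg {x. 0 < x} UNIV" and a: "a \<in> ELser H1"
  shows "Psi (hExp lg H1 lam1 a) = hExp lg H2 lam2 (Psi a)"
proof -
  obtain x where x: "x \<in> ELser H1" "hpos x" "hLog lg lam1 x = a" using t1.Log_surj[OF lb a] by blast
  have "hExp lg H1 lam1 a = x" unfolding hExp_def
  proof (rule the_equality)
    show "x \<in> ELser H1 \<and> hpos x \<and> hLog lg lam1 x = a" using x by blast
    fix y assume "y \<in> ELser H1 \<and> hpos y \<and> hLog lg lam1 y = a"
    then show "y = x" using t1.Log_inj[OF lb, of y x] x by simp
  qed
  moreover have "hExp lg H2 lam2 (Psi a) = Psi x"
  proof -
    have px: "Psi x \<in> ELser H2" using P_in[OF x(1)] .
    have dx: "gD.dom_in x" using dom_EL[OF x(1)] .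
    have "anti_wo (hsupp x)" using x(1) unfolding ELser_def hahn_def by auto
    then have pp: "hpos (Psi x)" using gD.hpos_sext[OF dx _ x(2)] by blast
    have pl: "hLog lg lam2 (Psi x) = Psi a" using P_Log[OF x(1) x(2), where lg = lg] x(3) by simp
    show ?thesis unfolding hExp_def
    proof (rule the_equality)
      show "Psi x \<in> ELser H2 \<and> hpos (Psi x) \<and> hLog lg lam2 (Psi x) = Psi a" using px pp pl by blast
      fix y assume "y \<in> ELser H2 \<and> hpos y \<and> hLog lg lam2 y = Psi a"
      then show "y = Psi x" using t2.Log_inj[OF lb, of y "Psi x"] px pp pl by simp
    qed
  qed
  ultimately show ?thesis by simp
qed

end




context morph
begin

lemma pre_img:
  fixes b :: "'v \<Rightarrow> 'k"
  assumes sub: "H2 m \<subseteq> phi ` H1 k" and b: "b \<in> hahn (H2 m)"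
  defines "ab \<equiv> (\<lambda>x. if x \<in> H1 k then b (phi x) else 0)"
  shows "ab \<in> hahn (H1 k) \<and> Psi ab = b"
proof -
  have bw: "anti_wo (hsupp b)" and bH: "hsupp b \<subseteq> H2 m" using b unfolding hahn_def by auto
  have mk: "\<forall>x\<in>H1 k. \<forall>y\<in>H1 k. x < y \<longrightarrow> phi x < phi y" using gD.mono H1_D1 by blast
  have sa: "hsupp ab \<subseteq> {x\<in>H1 k. phi x \<in> hsupp b}" unfolding ab_def by (auto split: if_splits)
  have aw: "anti_wo (hsupp ab)" using anti_wo_subset[OF anti_wo_preimage[OF bw mk] sa] .
  have aH: "hsupp ab \<subseteq> H1 k" using sa by blast
  have da: "gD.dom_in ab" unfolding gD.dom_in_def
  proof (intro allI impI)
    fix x assume "ab x \<noteq> 0"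
    then have "x \<in> hsupp ab" by simp
    then show "x \<in> D1" using aH H1_D1 by blast
  qed
  have "Psi ab = b"
  proof (rule gD.sext_eqI[OF da])
    fix x assume x: "x \<in> D1"
    show "b (phi x) = ab x"
    proof (cases "x \<in> H1 k")
      case False
      have "b (phi x) = 0"
      proof (rule ccontr)
        assume "b (phi x) \<noteq> 0"
        then have "phi x \<in> H2 m" using bH by auto
        then obtain y where y: "y \<in> H1 k" "phi x = phi y" using sub by blast
        then have "x = y" using gD.inj x H1_D1 unfolding inj_on_def by blast
        then show False using y False by simp
      qed
      then show ?thesis using False unfolding ab_def by simp
    qed (simp add: ab_def)
  next
    fix h assume h: "h \<notin> phi ` D1"
    show "b h = 0"
    proof (rule ccontr)
      assume "b h \<noteq> 0"
      then have "h \<in> H2 m" using bH by auto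
      then have "h \<in> phi ` D1" using sub H1_D1 by blast
      then show False using h by blast
    qed
  qed
  then show ?thesis using aw aH unfolding hahn_def by blast
qed

lemma H2_sub:
  assumes n: "G2 \<subseteq> phi ` H1 n"
  shows "H2 m \<subseteq> phi ` H1 (n + m)"
proof (induct m)
  case 0 then show ?case using n t2.H0 by simp
next
  case (Suc m)
  show ?case
  proof
    fix g' assume g': "g' \<in> H2 (Suc m)"
    have lg: "lam2 g' \<in> hahn {x\<in>H2 m. 0 < x}" using t2.lam_in[OF g'] .
    then have "lam2 g' \<in> hahn (H2 m)" using t1.hahn_mono[of "{x\<in>H2 m. 0 < x}" "H2 m"] by blast
    define a where "a = (\<lambda>x. if x \<in> H1 (n + m) then lam2 g' (phi x) else 0)"
    have a: "a \<in> hahn (H1 (n + m))" "Psi a = lam2 g'" using pre_img[OF Suc \<open>lam2 g' \<in> hahn (H2 m)\<close>] unfolding a_def by auto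
    have "a \<in> hahn {x\<in>H1 (n + m). 0 < x}"
    proof -
      have "hsupp a \<subseteq> {x\<in>H1 (n + m). 0 < x}"
      proof
        fix x assume "x \<in> hsupp a"
        then have x: "x \<in> H1 (n + m)" "lam2 g' (phi x) \<noteq> 0" unfolding a_def by (auto split: if_splits)
        then have "0 < phi x" using lg unfolding hahn_def by auto
        then have "0 < x" using gD.fpos_iff x(1) H1_D1 by blast
        then show "x \<in> {x\<in>H1 (n + m). 0 < x}" using x by blast
      qed
      then show ?thesis using a(1) unfolding hahn_def by blast
    qed
    then have "a \<in> lam1 ` H1 (Suc (n + m))" using t1.bij[of "n + m"] unfolding bij_betw_def by blast
    then obtain g where g: "g \<in> H1 (Suc (n + m))" "lam1 g = a" by (metis imageE)
    have gD1: "g \<in> D1" using g(1) H1_D1 by blast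
    have "lam2 (phi g) = lam2 g'" using lam_phi[OF gD1] g(2) a(2) by simp
    moreover have "phi g \<in> H2 (Suc (n + m))" using phi_H[OF g(1)] .
    moreover have "g' \<in> H2 (Suc (n + m))" using g' t2.Hmono[of "Suc m" "Suc (n + m)"] by auto
    ultimately have "phi g = g'" using t2.lam_inj unfolding inj_on_def by blast
    then show "g' \<in> phi ` H1 (n + Suc m)" using g(1) by auto
  qed
qed

lemma part3a:
  assumes n: "G2 \<subseteq> phi ` H1 n"
  shows "hahn (H2 m) \<subseteq> Psi ` (hahn (H1 (n + m)) :: ('u \<Rightarrow> 'k) set)"
proof
  fix b :: "'v \<Rightarrow> 'k" assume "b \<in> hahn (H2 m)"
  then have h: "(\<lambda>x. if x \<in> H1 (n + m) then b (phi x) else 0) \<in> hahn (H1 (n + m)) \<and> Psi (\<lambda>x. if x \<in> H1 (n + m) then b (phi x) else 0) = b"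
    by (rule pre_img[OF H2_sub[OF n]])
  then obtain a :: "'u \<Rightarrow> 'k" where "a \<in> hahn (H1 (n + m))" "Psi a = b" by blast
  then show "b \<in> Psi ` (hahn (H1 (n + m)) :: ('u \<Rightarrow> 'k) set)" by blast
qed

lemma part3b:
  assumes n: "G2 \<subseteq> phi ` H1 n"
  shows "Psi ` (ELser H1 :: ('u \<Rightarrow> 'k) set) = ELser H2"
proof
  show "Psi ` (ELser H1 :: ('u \<Rightarrow> 'k) set) \<subseteq> ELser H2"
  proof
    fix b assume "b \<in> Psi ` (ELser H1 :: ('u \<Rightarrow> 'k) set)"
    then obtain a :: "'u \<Rightarrow> 'k" where "a \<in> ELser H1" "b = Psi a" by blast
    then show "b \<in> ELser H2" using P_in by simp
  qed
  show "ELser H2 \<subseteq> Psi ` (ELser H1 :: ('u \<Rightarrow> 'k) set)"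
  proof
    fix b :: "'v \<Rightarrow> 'k" assume "b \<in> ELser H2"
    then obtain m where "b \<in> hahn (H2 m)" unfolding ELser_def by blast
    then have "b \<in> Psi ` (hahn (H1 (n + m)) :: ('u \<Rightarrow> 'k) set)" using part3a[OF n] by blast
    then obtain a :: "'u \<Rightarrow> 'k" where "a \<in> hahn (H1 (n + m))" "b = Psi a" by blast
    moreover have "hahn (H1 (n + m)) \<subseteq> (ELser H1 :: ('u \<Rightarrow> 'k) set)" unfolding ELser_def by blast
    ultimately show "b \<in> Psi ` (ELser H1 :: ('u \<Rightarrow> 'k) set)" by blast
  qed
qed

lemma part3c_b:
  assumes n: "G2 \<subseteq> phi ` H1 n" and bE: "(b :: 'v \<Rightarrow> 'k) \<in> ELser H2"
  shows "hsummable (\<lambda>g. hscale (b g) (inv_into (ELser H1 :: ('u \<Rightarrow> 'k) set) Psi (monom g))) (hsupp b) \<and>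
    inv_into (ELser H1 :: ('u \<Rightarrow> 'k) set) Psi b = hsum (\<lambda>g. hscale (b g) (inv_into (ELser H1 :: ('u \<Rightarrow> 'k) set) Psi (monom g))) (hsupp b)"
  proof -
    from bE obtain m where b: "b \<in> hahn (H2 m)" unfolding ELser_def by blast
    let ?k = "n + m"
    have sub: "H2 m \<subseteq> phi ` H1 ?k" using H2_sub[OF n] .
    have bw: "anti_wo (hsupp b)" and bH: "hsupp b \<subseteq> H2 m" using b unfolding hahn_def by auto
    define \<rho> where "\<rho> = inv_into D1 phi"
    have rho: "\<rho> g' \<in> H1 ?k \<and> phi (\<rho> g') = g'" if gs: "g' \<in> hsupp b" for g'
    proof -
      have "g' \<in> phi ` H1 ?k" using gs bH sub by blast
      then obtain y where y: "y \<in> H1 ?k" "phi y = g'" by blast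
      then have "\<rho> g' = y" unfolding \<rho>_def using gD.inj H1_D1 by (metis inv_into_f_f subsetD)
      then show ?thesis using y by simp
    qed
    let ?inv = "inv_into (ELser H1) (Psi :: ('u \<Rightarrow> 'k) \<Rightarrow> _)"
    have im: "?inv (monom g') = monom (\<rho> g')" if gs: "g' \<in> hsupp b" for g'
    proof -
      have "(monom (\<rho> g') :: 'u \<Rightarrow> 'k) \<in> hahn (H1 ?k)" unfolding hahn_def
      proof (intro CollectI conjI)
        have "hsupp (monom (\<rho> g') :: 'u \<Rightarrow> 'k) = {\<rho> g'}" by (auto simp: monom_def split: if_splits)
        then show "hsupp (monom (\<rho> g') :: 'u \<Rightarrow> 'k) \<subseteq> H1 ?k" "anti_wo (hsupp (monom (\<rho> g') :: 'u \<Rightarrow> 'k))"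
          using rho[OF gs] anti_wo_insert[OF anti_wo_empty] by auto
      qed
      then have "monom (\<rho> g') \<in> (ELser H1 :: ('u \<Rightarrow> 'k) set)" unfolding ELser_def by blast
      moreover have "Psi (monom (\<rho> g') :: 'u \<Rightarrow> 'k) = monom g'" using rho[OF gs] by (simp add: sext_monom)
      ultimately show ?thesis using inv_into_f_eq[OF P_inj] by metis
    qed
    let ?F = "\<lambda>g'. hscale (b g') (?inv (monom g'))"
    let ?F' = "\<lambda>g'. hscale (b g') (monom (\<rho> g') :: 'u \<Rightarrow> 'k)"
    have FF: "\<And>g'. g' \<in> hsupp b \<Longrightarrow> ?F g' = ?F' g'" using im by simp
    have F': "?F' g' x = (if \<rho> g' = x then b g' else 0)" for g' x by (simp add: hscale_def monom_def)
    have rmono: "\<forall>x\<in>hsupp b. \<forall>y\<in>hsupp b. x < y \<longrightarrow> \<rho> x < \<rho> y"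
    proof (intro ballI impI)
      fix x y assume x: "x \<in> hsupp b" and y: "y \<in> hsupp b" and xy: "x < y"
      show "\<rho> x < \<rho> y"
      proof (rule ccontr)
        assume "\<not> \<rho> x < \<rho> y"
        then have "\<rho> y \<le> \<rho> x" by simp
        moreover have "\<rho> x \<in> D1" "\<rho> y \<in> D1" using rho x y H1_D1 by blast+
        ultimately have "phi (\<rho> y) \<le> phi (\<rho> x)" using gD.mono by (metis order_le_less)
        then show False using rho x y xy by simp
      qed
    qed
    have U: "(\<Union>g'\<in>hsupp b. hsupp (?F' g')) \<subseteq> \<rho> ` hsupp b" using F' by (auto split: if_splits)
    have U': "anti_wo (\<Union>g'\<in>hsupp b. hsupp (?F' g'))"
      using anti_wo_subset[OF anti_wo_image[OF bw rmono] U] .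
    have fin: "finite {g'\<in>hsupp b. ?F' g' x \<noteq> 0}" for x
    proof (cases "{g'\<in>hsupp b. ?F' g' x \<noteq> 0} = {}")
      case False
      then obtain g0 where g0: "g0 \<in> hsupp b" "?F' g0 x \<noteq> 0" by blast
      have "{g'\<in>hsupp b. ?F' g' x \<noteq> 0} \<subseteq> {g0}"
      proof
        fix g' assume g': "g' \<in> {g'\<in>hsupp b. ?F' g' x \<noteq> 0}"
        then have "\<rho> g' = x" "\<rho> g0 = x" using g0 F' by (auto split: if_splits)
        then have "phi (\<rho> g') = phi (\<rho> g0)" by simp
        then show "g' \<in> {g0}" using rho g0(1) g' by auto
      qed
      then show ?thesis by (rule finite_subset) simp
    next
      case True show ?thesis unfolding True by simp
    qed
    have "hsummable ?F' (hsupp b)" unfolding hsummable_def using U' fin by blast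
    moreover have "hsummable ?F (hsupp b) = hsummable ?F' (hsupp b)" by (rule hsummable_cong) (rule FF)
    ultimately have HS: "hsummable ?F (hsupp b)" by simp
    define a where "a = (\<lambda>x. if x \<in> H1 ?k then b (phi x) else 0)"
    have a: "a \<in> hahn (H1 ?k)" "Psi a = b" using pre_img[OF sub b] unfolding a_def by auto
    have aE: "a \<in> ELser H1" using a(1) unfolding ELser_def by blast
    have "?inv (Psi a) = a" by (rule inv_into_f_f[OF P_inj aE])
    then have "?inv b = a" using a(2) by simp
    moreover have "a = hsum ?F' (hsupp b)"
    proof
      fix x
      show "a x = hsum ?F' (hsupp b) x"
      proof (cases "x \<in> H1 ?k \<and> b (phi x) \<noteq> 0")
        case True
        have xD: "x \<in> D1" using True H1_D1 by blast
        have rx: "\<rho> (phi x) = x" unfolding \<rho>_def using gD.inj xD by (simp add: inv_into_f_f)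
        have S: "{g'\<in>hsupp b. ?F' g' x \<noteq> 0} = {phi x}"
        proof (intro set_eqI iffI)
          fix g' assume "g' \<in> {g'\<in>hsupp b. ?F' g' x \<noteq> 0}"
          then have "g' \<in> hsupp b" "\<rho> g' = x" using F' by (auto split: if_splits)
          then show "g' \<in> {phi x}" using rho by force
        next
          fix g' assume "g' \<in> {phi x}"
          then show "g' \<in> {g'\<in>hsupp b. ?F' g' x \<noteq> 0}" using True rx F' by simp
        qed
        show ?thesis unfolding hsum_def S using True rx a_def by (simp add: hscale_def monom_def)
      next
        case False
        have S: "{g'\<in>hsupp b. ?F' g' x \<noteq> 0} = {}"
        proof (rule ccontr)
          assume "\<not> ?thesis"
          then obtain g' where g': "g' \<in> hsupp b" "\<rho> g' = x" using F' by (auto split: if_splits)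
          then have "x \<in> H1 ?k" "phi x = g'" using rho by force+
          then show False using False g' by simp
        qed
        have "a x = 0" using False unfolding a_def by auto
        then show ?thesis unfolding hsum_def S by simp
      qed
    qed
  moreover have "hsum ?F (hsupp b) = hsum ?F' (hsupp b)" by (rule hsum_cong) (rule FF)
  ultimately have "?inv b = hsum ?F (hsupp b)" by simp
  then show ?thesis using HS by simp
qed

lemma part3c:
  assumes n: "G2 \<subseteq> phi ` H1 n"
  shows "respects_sums (ELser H2 :: ('v \<Rightarrow> 'k) set) (inv_into (ELser H1 :: ('u \<Rightarrow> 'k) set) Psi)"
  unfolding respects_sums_def using part3c_b[OF n] by blast

end


theorem proposition7:
  fixes log :: "'k::linordered_field \<Rightarrow> 'k"
    and G1 :: "'u::linordered_ab_group_add set" and l1 :: "'u \<Rightarrow> 'u \<Rightarrow> 'k"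
    and G2 :: "'v::linordered_ab_group_add set" and l2 :: "'v \<Rightarrow> 'v \<Rightarrow> 'k"
    and H1 :: "nat \<Rightarrow> 'u set" and lam1 :: "'u \<Rightarrow> 'u \<Rightarrow> 'k"
    and H2 :: "nat \<Rightarrow> 'v set" and lam2 :: "'v \<Rightarrow> 'v \<Rightarrow> 'k"
    and psi :: "'u \<Rightarrow> 'v"
  assumes log_bij: "bij_betw log {x. 0 < x} UNIV"
    and log_mult: "\<forall>x>0. \<forall>y>0. log (x * y) = log x + log y"
    and log_mono: "\<forall>x>0. \<forall>y>0. x < y \<longrightarrow> log x < log y"
    and pl1: "prelog_section G1 l1"
    and pl2: "prelog_section G2 l2"
    and T1: "EL_tower G1 l1 H1 lam1"
    and T2: "EL_tower G2 l2 H2 lam2"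
    and psi_into: "\<forall>g\<in>G1. psi g \<in> G2"
    and psi_hom: "\<forall>x\<in>G1. \<forall>y\<in>G1. psi (x + y) = psi x + psi y"
    and psi_mono: "\<forall>x\<in>G1. \<forall>y\<in>G1. x < y \<longrightarrow> psi x < psi y"
    and psi_morph: "\<forall>g\<in>G1. sext psi (l1 g) = l2 (psi g)"
  shows
   "(let Psi = PsiEL H1 lam1 H2 lam2 psi in
     \<comment> \<open>(1)\<close>
     ((\<forall>a\<in>ELser H1. Psi a \<in> ELser H2) \<and>
      inj_on Psi (ELser H1) \<and>
      (\<forall>a\<in>ELser H1. \<forall>b\<in>ELser H1. Psi (hadd a b) = hadd (Psi a) (Psi b)) \<and>
      (\<forall>a\<in>ELser H1. \<forall>b\<in>ELser H1. Psi (hmul a b) = hmul (Psi a) (Psi b)) \<and>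
      (\<forall>c. Psi (hconst c) = hconst c) \<and>
      (\<forall>c. \<forall>a\<in>ELser H1. Psi (hscale c a) = hscale c (Psi a)) \<and>
      (\<forall>a\<in>ELser H1. \<forall>b\<in>ELser H1. hless a b \<longrightarrow> hless (Psi a) (Psi b)) \<and>
      respects_sums (ELser H1) Psi) \<and>
     \<comment> \<open>(2)\<close>
     ((\<forall>a\<in>ELser H1. hpos a \<longrightarrow> Psi (hLog log lam1 a) = hLog log lam2 (Psi a)) \<and>
      (\<forall>a\<in>ELser H1. Psi (hExp log H1 lam1 a) = hExp log H2 lam2 (Psi a))) \<and>
     \<comment> \<open>(3)\<close>
     (\<forall>n. G2 \<subseteq> psiEL H1 lam1 H2 lam2 psi ` H1 n \<longrightarrow>
        (\<forall>m. hahn (H2 m) \<subseteq> Psi ` hahn (H1 (n + m))) \<and>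
        Psi ` ELser H1 = ELser H2 \<and>
        respects_sums (ELser H2) (inv_into (ELser H1) Psi)))"
proof -
  have sg1: "subgroup_of G1" using pl1 unfolding prelog_section_def by blast
  have sg2: "subgroup_of G2" using pl2 unfolding prelog_section_def by blast
  interpret M: morph G1 l1 H1 lam1 G2 l2 H2 lam2 psi
    by (intro morph.intro tower.intro morph_axioms.intro sg1 sg2 T1 T2 psi_into psi_hom psi_mono psi_morph)
  have PE: "PsiEL H1 lam1 H2 lam2 psi = M.Psi" unfolding PsiEL_def ..
  show ?thesis
    unfolding Let_def PE
  proof (intro conjI ballI allI impI)
    show "\<And>a :: 'u \<Rightarrow> 'k. a \<in> ELser H1 \<Longrightarrow> M.Psi a \<in> ELser H2" by (rule M.P_in)
    show "inj_on M.Psi (ELser H1 :: ('u \<Rightarrow> 'k) set)" by (rule M.P_inj)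
    show "\<And>a b :: 'u \<Rightarrow> 'k. a \<in> ELser H1 \<Longrightarrow> b \<in> ELser H1 \<Longrightarrow> M.Psi (hadd a b) = hadd (M.Psi a) (M.Psi b)"
      by (rule M.gD.sext_hadd[OF M.dom_EL M.dom_EL])
    show "\<And>a b :: 'u \<Rightarrow> 'k. a \<in> ELser H1 \<Longrightarrow> b \<in> ELser H1 \<Longrightarrow> M.Psi (hmul a b) = hmul (M.Psi a) (M.Psi b)"
      by (rule M.gD.sext_hmul[OF M.dom_EL M.dom_EL])
    show "\<And>c :: 'k. M.Psi (hconst c :: 'u \<Rightarrow> 'k) = hconst c" by (rule M.gD.sext_hconst)
    show "\<And>(c :: 'k) (a :: 'u \<Rightarrow> 'k). a \<in> ELser H1 \<Longrightarrow> M.Psi (hscale c a) = hscale c (M.Psi a)"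
      by (rule M.gD.sext_hscale[OF M.dom_EL])
    show "\<And>a b :: 'u \<Rightarrow> 'k. a \<in> ELser H1 \<Longrightarrow> b \<in> ELser H1 \<Longrightarrow> hless a b \<Longrightarrow> hless (M.Psi a) (M.Psi b)"
      by (rule M.P_hless)
    show "respects_sums (ELser H1 :: ('u \<Rightarrow> 'k) set) M.Psi" by (rule M.P_resp)
    show "\<And>a :: 'u \<Rightarrow> 'k. a \<in> ELser H1 \<Longrightarrow> hpos a \<Longrightarrow> M.Psi (hLog log lam1 a) = hLog log lam2 (M.Psi a)"
      by (rule M.P_Log)
    show "\<And>a :: 'u \<Rightarrow> 'k. a \<in> ELser H1 \<Longrightarrow> M.Psi (hExp log H1 lam1 a) = hExp log H2 lam2 (M.Psi a)"
      by (rule M.P_Exp[OF log_bij])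
    show "\<And>n m. G2 \<subseteq> psiEL H1 lam1 H2 lam2 psi ` H1 n \<Longrightarrow> hahn (H2 m) \<subseteq> M.Psi ` (hahn (H1 (n + m)) :: ('u \<Rightarrow> 'k) set)"
      by (rule M.part3a)
    show "\<And>n. G2 \<subseteq> psiEL H1 lam1 H2 lam2 psi ` H1 n \<Longrightarrow> M.Psi ` (ELser H1 :: ('u \<Rightarrow> 'k) set) = ELser H2"
      by (rule M.part3b)
    show "\<And>n. G2 \<subseteq> psiEL H1 lam1 H2 lam2 psi ` H1 n \<Longrightarrow> respects_sums (ELser H2 :: ('v \<Rightarrow> 'k) set) (inv_into (ELser H1 :: ('u \<Rightarrow> 'k) set) M.Psi)"
      by (rule M.part3c)
  qed
qed

end
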